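(* Let $\mathcal{A}$ be a $\mathbb{Z}_2$-graded Hopf algebra with homogeneous basis $\{e_\alpha\}$, and let $D(\mathcal{A})$, $H(\mathcal{A})$, $H(\mathcal{A}^* )$ be as in the context. Let $a,a',b,b'\in\mathbb{Z}_{\ge0}$ satisfy $(-1)^{a+a'}=-1$ and $(-1)^{b+b'}=1$. Then the map $\eta:D(\mathcal{A})\to H(\mathcal{A})\otimes H(\mathcal{A}^* )$ given on generators by $$\eta(e_\alpha\otimes 1)=\sum_{\beta,\gamma}(-1)^{a|\beta|+b|\gamma|}\mu^{\beta\gamma}_\alpha\, e_\beta\otimes\tilde e_\gamma,\qquad \eta(1\otimes e^\alpha)=\sum_{\beta,\gamma}(-1)^{a'|\beta|+b'|\gamma|}m^\alpha_{\gamma\beta}\, e^\beta\otimes\tilde e^\gamma$$ (and $\eta(e_\alpha\otimes e^\beta)=\eta(e_\alpha\otimes 1)\eta(1\otimes e^\beta)$) is an algebra homomorphism.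
   Context: Graded tensor products: $(a_1\otimes b_1)(a_2\otimes b_2)=(-1)^{|b_1||a_2|}a_1a_2\otimes b_1b_2$. $\mathcal{A}$ is a $\mathbb{Z}_2$-graded Hopf algebra over $\mathbb{C}$ with homogeneous basis $e_\alpha$ of degree $|\alpha|$, $e_\alpha e_\beta=\sum_\gamma m^\gamma_{\alpha\beta}e_\gamma$, $\Delta(e_\alpha)=\sum\mu^{\beta\gamma}_\alpha e_\beta\otimes e_\gamma$, antipode $\gamma(e_\alpha)=\sum\gamma_\alpha^\beta e_\beta$ with inverse coefficients $(\gamma^{-1})^\beta_\alpha$; dual Hopf algebra $\mathcal{A}^*$ with dual basis $e^\alpha$. The Drinfeld double $D(\mathcal{A})$ is spanned by $e_\alpha\otimes e^\beta$ with relations $(e_\alpha\otimes1)(1\otimes e^\beta)=e_\alpha\otimes e^\beta$, $(e_\alpha\otimes1)(e_\beta\otimes1)=\sum_\gamma m^\gamma_{\alpha\beta}e_\gamma\otimes1$, $(1\otimes e^\alpha)(1\otimes e^\beta)=\sum_\gamma(-1)^{|\alpha||\beta|}\mu^{\alpha\beta}_\gamma\,1\otimes e^\gamma$, and $(1\otimes e^\alpha)(e_\beta\otimes1)=\sum(-1)^{|\mu|(|\sigma|+|\delta|)}m^\mu_{\nu\gamma}m^\alpha_{\mu\delta}\mu^{\epsilon\rho}_\beta\mu^{\sigma\nu}_\rho(\gamma^{-1})^\delta_\epsilon\, e_\sigma\otimes e^\gamma$ (sum over $\mu,\nu,\gamma,\delta,\epsilon,\rho,\sigma$). The Heisenberg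 double $H(\mathcal{A})$ is spanned by $e^\alpha\otimes e_\beta$ with product $(e^\alpha\otimes e_\beta)(e^\gamma\otimes e_\delta)=\sum(-1)^{|\beta||\gamma|+|\pi||\epsilon|+|\pi||\alpha|+|\epsilon|}m^\gamma_{\pi\epsilon}m^\tau_{\rho\delta}\mu^{\epsilon\rho}_\beta\mu^{\alpha\pi}_\sigma e^\sigma\otimes e_\tau$; write $e_\alpha=1\otimes e_\alpha$, $e^\alpha=e^\alpha\otimes1$. The Heisenberg double $H(\mathcal{A}^* )$ is spanned by $\tilde e_\alpha\otimes\tilde e^\beta$ with product $(\tilde e_\alpha\otimes\tilde e^\beta)(\tilde e_\gamma\otimes\tilde e^\delta)=\sum(-1)^{|\rho||\pi|+|\rho||\epsilon|+|\pi||\delta|}\mu^{\rho\epsilon}_\gamma\mu^{\pi\delta}_\tau m^\beta_{\epsilon\pi}m^\sigma_{\alpha\rho}\tilde e_\sigma\otimes\tilde e^\tau$; write $\tilde e_\alpha=\tilde e_\alpha\otimes1$, $\tilde e^\alpha=1\otimes\tilde e^\alpha$, degrees $|\alpha|$. $H(\mathcal{A})\otimes H(\mathcal{A}^* )$ carries the graded tensor product algebra structure. *)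

theory Defs
  imports Main "HOL-Analysis.Analysis"
begin

text \<open>
A finite-dimensional Z2-graded Hopf algebra over the complex numbers
is given by structure constants with respect to a homogeneous basis indexed by a
finite type 'i.  The Z2-degree of basis element e_i is the parity of deg i.
  m g a b      = m^g_{ab}           (e_a e_b = sum_g m^g_{ab} e_g)
  u a          = coefficient of e_a in the unit 1
  mu a b c     = mu^{bc}_a          (Delta e_a = sum mu^{bc}_a e_b (x) e_c)
  eps a        = counit of e_a
  S a b        = gamma_a^b          (antipode: gamma e_a = sum gamma_a^b e_b)
  Sinv a b     = (gamma^{-1})_a^b
\<close>

definition sgn :: "nat \<Rightarrow> complex" where
  "sgn k = (-1) ^ k"

definition kron :: "'a \<Rightarrow> 'a \<Rightarrow> complex" where
  "kron x y = (if x = y then 1 else 0)"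

definition graded_hopf ::
  "('i::finite \<Rightarrow> nat) \<Rightarrow> ('i \<Rightarrow> 'i \<Rightarrow> 'i \<Rightarrow> complex) \<Rightarrow> ('i \<Rightarrow> complex)
   \<Rightarrow> ('i \<Rightarrow> 'i \<Rightarrow> 'i \<Rightarrow> complex) \<Rightarrow> ('i \<Rightarrow> complex) \<Rightarrow> ('i \<Rightarrow> 'i \<Rightarrow> complex) \<Rightarrow> bool" where
  "graded_hopf deg m u mu eps S \<longleftrightarrow>
    \<comment> \<open>homogeneity: all structure maps are even\<close>
    (\<forall>g a b. m g a b \<noteq> 0 \<longrightarrow> even (deg g + deg a + deg b)) \<and>
    (\<forall>a b c. mu a b c \<noteq> 0 \<longrightarrow> even (deg a + deg b + deg c)) \<and>
    (\<forall>a. u a \<noteq> 0 \<longrightarrow> even (deg a)) \<and>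
    (\<forall>a. eps a \<noteq> 0 \<longrightarrow> even (deg a)) \<and>
    (\<forall>a b. S a b \<noteq> 0 \<longrightarrow> even (deg a + deg b)) \<and>
    \<comment> \<open>associative unital algebra\<close>
    (\<forall>a b c d. (\<Sum>k\<in>UNIV. m k a b * m d k c) = (\<Sum>k\<in>UNIV. m k b c * m d a k)) \<and>
    (\<forall>a d. (\<Sum>k\<in>UNIV. u k * m d k a) = kron d a) \<and>
    (\<forall>a d. (\<Sum>k\<in>UNIV. u k * m d a k) = kron d a) \<and>
    \<comment> \<open>coassociative counital coalgebra\<close>
    (\<forall>a r s c. (\<Sum>k\<in>UNIV. mu a k c * mu k r s) = (\<Sum>k\<in>UNIV. mu a r k * mu k s c)) \<and>
    (\<forall>a c. (\<Sum>b\<in>UNIV. eps b * mu a b c) = kron a c) \<and>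
    (\<forall>a b. (\<Sum>c\<in>UNIV. eps c * mu a b c) = kron a b) \<and>
    \<comment> \<open>Delta and eps are algebra maps (A (x) A with the graded tensor product)\<close>
    (\<forall>a b r s. (\<Sum>g\<in>UNIV. m g a b * mu g r s) =
       (\<Sum>r1\<in>UNIV. \<Sum>s1\<in>UNIV. \<Sum>r2\<in>UNIV. \<Sum>s2\<in>UNIV.
          sgn (deg s1 * deg r2) * mu a r1 s1 * mu b r2 s2 * m r r1 r2 * m s s1 s2)) \<and>
    (\<forall>r s. (\<Sum>g\<in>UNIV. u g * mu g r s) = u r * u s) \<and>
    (\<forall>a b. (\<Sum>g\<in>UNIV. m g a b * eps g) = eps a * eps b) \<and>
    (\<Sum>g\<in>UNIV. u g * eps g) = 1 \<and>
    \<comment> \<open>antipode\<close>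
    (\<forall>a d. (\<Sum>b\<in>UNIV. \<Sum>c\<in>UNIV. \<Sum>k\<in>UNIV. mu a b c * S b k * m d k c) = eps a * u d) \<and>
    (\<forall>a d. (\<Sum>b\<in>UNIV. \<Sum>c\<in>UNIV. \<Sum>k\<in>UNIV. mu a b c * S c k * m d b k) = eps a * u d)"

definition inverse_coeffs :: "('i::finite \<Rightarrow> 'i \<Rightarrow> complex) \<Rightarrow> ('i \<Rightarrow> 'i \<Rightarrow> complex) \<Rightarrow> bool" where
  "inverse_coeffs S Sinv \<longleftrightarrow>
    (\<forall>a b. (\<Sum>k\<in>UNIV. S a k * Sinv k b) = kron a b) \<and>
    (\<forall>a b. (\<Sum>k\<in>UNIV. Sinv a k * S k b) = kron a b)"

text \<open>An algebra given by structure constants c on a finite basis 'b: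
 elements are coefficient functions, x y = sum_{i,j} x_i y_j c i j.\<close>

definition sc_mult :: "('b::finite \<Rightarrow> 'b \<Rightarrow> 'b \<Rightarrow> complex) \<Rightarrow> ('b \<Rightarrow> complex) \<Rightarrow> ('b \<Rightarrow> complex) \<Rightarrow> ('b \<Rightarrow> complex)" where
  "sc_mult c x y = (\<lambda>k. \<Sum>i\<in>UNIV. \<Sum>j\<in>UNIV. x i * y j * c i j k)"

definition basis_vec :: "'b \<Rightarrow> ('b \<Rightarrow> complex)" where
  "basis_vec i = (\<lambda>k. kron i k)"

text \<open>Drinfeld double D(A): basis e_a (x) e^b indexed by (a,b).
 cross term: (1 (x) e^b)(e_g (x) 1) = sum_{s,t} D_cross b g s t  e_s (x) e^t\<close>

definition D_cross where
  "D_cross deg m mu Sinv be ga s t =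
     (\<Sum>mm\<in>UNIV. \<Sum>nu\<in>UNIV. \<Sum>de\<in>UNIV. \<Sum>ep\<in>UNIV. \<Sum>rho\<in>UNIV.
        sgn (deg mm * (deg s + deg de)) * m mm nu t * m be mm de * mu ga ep rho * mu rho s nu * Sinv ep de)"

text \<open>(e_a (x) e^b)(e_g (x) e^d) = (e_a (x) 1)(1 (x) e^b)(e_g (x) 1)(1 (x) e^d),
 using (e_a (x) 1)(e_s (x) e^t) = e_a e_s (x) e^t and (e_k (x) e^t)(1 (x) e^d) = e_k (x) e^t e^d.\<close>

definition D_const where
  "D_const deg m mu Sinv = (\<lambda>(al, be) (ga, de) (k, l).
     \<Sum>s\<in>UNIV. \<Sum>t\<in>UNIV. D_cross deg m mu Sinv be ga s t * m k al s * sgn (deg t * deg de) * mu l t de)"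

definition D_unit :: "('i::finite \<Rightarrow> complex) \<Rightarrow> ('i \<Rightarrow> complex) \<Rightarrow> ('i \<times> 'i \<Rightarrow> complex)" where
  "D_unit u eps = (\<lambda>(a, b). u a * eps b)"

text \<open>Heisenberg double H(A): basis e^a (x) e_b indexed by (a,b).\<close>

definition HA_const where
  "HA_const deg m mu = (\<lambda>(al, be) (ga, de) (s, t).
     \<Sum>pi\<in>UNIV. \<Sum>ep\<in>UNIV. \<Sum>rho\<in>UNIV.
       sgn (deg be * deg ga + deg pi * deg ep + deg pi * deg al + deg ep) *
       m ga pi ep * m t rho de * mu be ep rho * mu s al pi)"

text \<open>Heisenberg double H(A*): basis ~e_a (x) ~e^b indexed by (a,b).\<close>

definition HAs_const where
  "HAs_const deg m mu = (\<lambda>(al, be) (ga, de) (s, t).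
     \<Sum>pi\<in>UNIV. \<Sum>ep\<in>UNIV. \<Sum>rho\<in>UNIV.
       sgn (deg rho * deg pi + deg rho * deg ep + deg pi * deg de) *
       mu ga rho ep * mu t pi de * m be ep pi * m s al rho)"

text \<open>Graded tensor product H(A) (x) H(A*); the degree of a basis element (a,b) of
 either Heisenberg double is deg a + deg b.\<close>

definition T_const where
  "T_const deg m mu = (\<lambda>(p1, q1) (p2, q2) (p, q).
     sgn ((deg (fst q1) + deg (snd q1)) * (deg (fst p2) + deg (snd p2))) *
     HA_const deg m mu p1 p2 p * HAs_const deg m mu q1 q2 q)"

definition T_unit :: "('i::finite \<Rightarrow> complex) \<Rightarrow> ('i \<Rightarrow> complex) \<Rightarrow> (('i \<times> 'i) \<times> ('i \<times> 'i) \<Rightarrow> complex)" where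
  "T_unit u eps = (\<lambda>((s, t), (k, l)). (eps s * u t) * (u k * eps l))"

text \<open>eta(e_a (x) 1) = sum (-1)^{a|b|+b|g|} mu^{bg}_a e_b (x) ~e_g, where
 e_b = 1 (x) e_b in H(A) (1 of A* is eps), ~e_g = ~e_g (x) 1 in H(A*).\<close>

definition eta_L where
  "eta_L deg mu eps a b al = (\<lambda>((s, t), (k, l)).
     \<Sum>be\<in>UNIV. \<Sum>ga\<in>UNIV. sgn (a * deg be + b * deg ga) * mu al be ga *
        ((eps s * kron be t) * (kron ga k * eps l)))"

text \<open>eta(1 (x) e^a) = sum (-1)^{a'|b|+b'|g|} m^a_{gb} e^b (x) ~e^g, where
 e^b = e^b (x) 1 in H(A) (1 of A is u), ~e^g = 1 (x) ~e^g in H(A*).\<close>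

definition eta_R where
  "eta_R deg m u a' b' al = (\<lambda>((s, t), (k, l)).
     \<Sum>be\<in>UNIV. \<Sum>ga\<in>UNIV. sgn (a' * deg be + b' * deg ga) * m al ga be *
        ((kron be s * u t) * (u k * kron ga l)))"

definition eta where
  "eta deg m u mu eps a a' b b' x =
     (\<lambda>z. \<Sum>p\<in>UNIV. x p *
        sc_mult (T_const deg m mu) (eta_L deg mu eps a b (fst p)) (eta_R deg m u a' b' (snd p)) z)"

definition alg_hom where
  "alg_hom c1 one1 c2 one2 f \<longleftrightarrow>
     (\<forall>x y. f (sc_mult c1 x y) = sc_mult c2 (f x) (f y)) \<and> f one1 = one2"

end

theory Submission
  imports Defs
begin

lemma sum_UNIV_pair: "(\<Sum>k\<in>(UNIV::('a::finite \<times> 'b::finite) set). f k) = (\<Sum>a\<in>UNIV. \<Sum>b\<in>UNIV. f (a,b))"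
  by (subst sum.cartesian_product) (simp add: case_prod_beta)

definition tw :: "('b::finite \<Rightarrow> 'b \<Rightarrow> 'b \<Rightarrow> complex) \<Rightarrow> ('c::finite \<Rightarrow> 'c \<Rightarrow> 'c \<Rightarrow> complex)
   \<Rightarrow> ('c \<Rightarrow> 'b \<Rightarrow> 'b \<Rightarrow> 'c \<Rightarrow> complex) \<Rightarrow> 'b \<times> 'c \<Rightarrow> 'b \<times> 'c \<Rightarrow> 'b \<times> 'c \<Rightarrow> complex" where
  "tw pb pc c = (\<lambda>(a1,b1) (a2,b2) (s,t). \<Sum>p\<in>UNIV. \<Sum>r\<in>UNIV. c b1 a2 p r * pb a1 p s * pc r b2 t)"

lemma tw_assoc:
  fixes pb :: "'b::finite \<Rightarrow> 'b \<Rightarrow> 'b \<Rightarrow> complex" and pc :: "'c::finite \<Rightarrow> 'c \<Rightarrow> 'c \<Rightarrow> complex"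
  assumes AB: "\<And>x y z w. (\<Sum>k\<in>UNIV. pb x y k * pb k z w) = (\<Sum>k\<in>UNIV. pb y z k * pb x k w)"
  and AC: "\<And>x y z w. (\<Sum>k\<in>UNIV. pc x y k * pc k z w) = (\<Sum>k\<in>UNIV. pc y z k * pc x k w)"
  and CB: "\<And>b g g' p r. (\<Sum>k\<in>UNIV. pb g g' k * c b k p r) =
      (\<Sum>p1\<in>UNIV. \<Sum>r1\<in>UNIV. \<Sum>p2\<in>UNIV. c b g p1 r1 * c r1 g' p2 r * pb p1 p2 p)"
  and CC: "\<And>b b' g p r. (\<Sum>k\<in>UNIV. pc b b' k * c k g p r) =
      (\<Sum>p1\<in>UNIV. \<Sum>r1\<in>UNIV. \<Sum>r2\<in>UNIV. c b' g p1 r1 * c b p1 p r2 * pc r2 r1 r)"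
  shows "(\<Sum>k\<in>UNIV. tw pb pc c i j k * tw pb pc c k l z) = (\<Sum>k\<in>UNIV. tw pb pc c j l k * tw pb pc c i k z)"
proof -
  obtain a1 b1 where i: "i = (a1,b1)" by fastforce
  obtain a2 b2 where j: "j = (a2,b2)" by fastforce
  obtain a3 b3 where l: "l = (a3,b3)" by fastforce
  obtain s t where z: "z = (s,t)" by fastforce
  have "(\<Sum>k\<in>UNIV. tw pb pc c i j k * tw pb pc c k l z) =
     (\<Sum>k1\<in>UNIV. \<Sum>k2\<in>UNIV. (\<Sum>p\<in>UNIV. \<Sum>r\<in>UNIV. c b1 a2 p r * pb a1 p k1 * pc r b2 k2) *
        (\<Sum>p'\<in>UNIV. \<Sum>r'\<in>UNIV. c k2 a3 p' r' * pb k1 p' s * pc r' b3 t))"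
    by (simp add: sum_UNIV_pair tw_def i j l z)
  also have "\<dots> = (\<Sum>p\<in>UNIV. \<Sum>r\<in>UNIV. \<Sum>p'\<in>UNIV. \<Sum>r'\<in>UNIV. c b1 a2 p r * (\<Sum>k1\<in>UNIV. pb a1 p k1 * pb k1 p' s) *
        (\<Sum>k2\<in>UNIV. pc r b2 k2 * c k2 a3 p' r') * pc r' b3 t)"
    apply (simp only: sum_distrib_left sum_distrib_right)?
    apply (simp only: sum.cartesian_product)
    apply (rule sum.reindex_bij_witness[of _ "\<lambda>(p,r,p',r',k2,k1). (k1,k2,p',r',p,r)" "\<lambda>(k1,k2,p',r',p,r). (p,r,p',r',k2,k1)"])
    by (auto simp: mult_ac)
  also have "\<dots> = (\<Sum>p\<in>UNIV. \<Sum>r\<in>UNIV. \<Sum>p'\<in>UNIV. \<Sum>r'\<in>UNIV. c b1 a2 p r * (\<Sum>k\<in>UNIV. pb p p' k * pb a1 k s) *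
        (\<Sum>p1\<in>UNIV. \<Sum>r1\<in>UNIV. \<Sum>r2\<in>UNIV. c b2 a3 p1 r1 * c r p1 p' r2 * pc r2 r1 r') * pc r' b3 t)"
    by (simp only: AB CC)
  also have "\<dots> = (\<Sum>p\<in>UNIV. \<Sum>r\<in>UNIV. \<Sum>p'\<in>UNIV. \<Sum>p1\<in>UNIV. \<Sum>r1\<in>UNIV. \<Sum>r2\<in>UNIV.
      c b1 a2 p r * c b2 a3 p1 r1 * c r p1 p' r2 * (\<Sum>k\<in>UNIV. pb p p' k * pb a1 k s) * (\<Sum>k\<in>UNIV. pc r2 r1 k * pc k b3 t))"
    apply (simp only: sum_distrib_left sum_distrib_right)?
    apply (simp only: sum.cartesian_product)
    apply (rule sum.reindex_bij_witness[of _ "\<lambda>(p,r,p',p1,r1,r2,r',k). (p,r,p',r',p1,r1,r2,k)" "\<lambda>(p,r,p',r',p1,r1,r2,k). (p,r,p',p1,r1,r2,r',k)"])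
    by (auto simp: mult_ac)
  also have "\<dots> = (\<Sum>p\<in>UNIV. \<Sum>r\<in>UNIV. \<Sum>p'\<in>UNIV. \<Sum>p1\<in>UNIV. \<Sum>r1\<in>UNIV. \<Sum>r2\<in>UNIV.
      c b1 a2 p r * c b2 a3 p1 r1 * c r p1 p' r2 * (\<Sum>k\<in>UNIV. pb p p' k * pb a1 k s) * (\<Sum>k\<in>UNIV. pc r1 b3 k * pc r2 k t))"
    by (simp only: AC)
  finally have L: "(\<Sum>k\<in>UNIV. tw pb pc c i j k * tw pb pc c k l z) = \<dots>" .
  have "(\<Sum>k\<in>UNIV. tw pb pc c j l k * tw pb pc c i k z) =
     (\<Sum>k1\<in>UNIV. \<Sum>k2\<in>UNIV. (\<Sum>p1\<in>UNIV. \<Sum>r1\<in>UNIV. c b2 a3 p1 r1 * pb a2 p1 k1 * pc r1 b3 k2) *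
        (\<Sum>p\<in>UNIV. \<Sum>r\<in>UNIV. c b1 k1 p r * pb a1 p s * pc r k2 t))"
    by (simp add: sum_UNIV_pair tw_def i j l z)
  also have "\<dots> = (\<Sum>p1\<in>UNIV. \<Sum>r1\<in>UNIV. \<Sum>p\<in>UNIV. \<Sum>r\<in>UNIV. c b2 a3 p1 r1 * (\<Sum>k1\<in>UNIV. pb a2 p1 k1 * c b1 k1 p r) *
        pb a1 p s * (\<Sum>k2\<in>UNIV. pc r1 b3 k2 * pc r k2 t))"
    apply (simp only: sum_distrib_left sum_distrib_right)?
    apply (simp only: sum.cartesian_product)
    apply (rule sum.reindex_bij_witness[of _ "\<lambda>(p1,r1,p,r,k2,k1). (k1,k2,p,r,p1,r1)" "\<lambda>(k1,k2,p,r,p1,r1). (p1,r1,p,r,k2,k1)"])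
    by (auto simp: mult_ac)
  also have "\<dots> = (\<Sum>p1\<in>UNIV. \<Sum>r1\<in>UNIV. \<Sum>p\<in>UNIV. \<Sum>r\<in>UNIV. c b2 a3 p1 r1 *
       (\<Sum>pa\<in>UNIV. \<Sum>ra\<in>UNIV. \<Sum>pb'\<in>UNIV. c b1 a2 pa ra * c ra p1 pb' r * pb pa pb' p) *
        pb a1 p s * (\<Sum>k2\<in>UNIV. pc r1 b3 k2 * pc r k2 t))"
    by (simp only: CB)
  also have "\<dots> = (\<Sum>p\<in>UNIV. \<Sum>r\<in>UNIV. \<Sum>p'\<in>UNIV. \<Sum>p1\<in>UNIV. \<Sum>r1\<in>UNIV. \<Sum>r2\<in>UNIV.
      c b1 a2 p r * c b2 a3 p1 r1 * c r p1 p' r2 * (\<Sum>k\<in>UNIV. pb p p' k * pb a1 k s) * (\<Sum>k\<in>UNIV. pc r1 b3 k * pc r2 k t))"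
    apply (simp only: sum_distrib_left sum_distrib_right)?
    apply (simp only: sum.cartesian_product)
    apply (rule sum.reindex_bij_witness[of _ "\<lambda>(p,r,p',p1,r1,r2,k2,k). (p1,r1,k,r2,k2,p,r,p')" "\<lambda>(p1,r1,k,r2,k2,p,r,p'). (p,r,p',p1,r1,r2,k2,k)"])
    by (auto simp: mult_ac)
  finally show ?thesis using L by simp
qed

lemma sgn_add: "sgn (x+y) = sgn x * sgn y" by (simp add: sgn_def power_add)
lemma sgn_if: "sgn x = (if even x then 1 else -1)" by (simp add: sgn_def minus_one_power_iff)
lemma sgn_sq: "sgn x * sgn x = 1" by (simp add: sgn_if)
lemma ev01: "even (0::nat) = True" "even (1::nat) = False" by simp_all
lemma sR3: "sgn x * (sgn y * b) = sgn (x+y) * (b::complex)" by (simp add: sgn_def power_add)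
lemma sR4: "sgn x * sgn y = (sgn (x+y)::complex)" by (simp add: sgn_def power_add)
lemma sgn_start: "sgn 0 * A = sgn 0 * B \<Longrightarrow> A = (B::complex)" by (simp add: sgn_def)
lemma sgn_eqI: "P = P' \<Longrightarrow> (P \<noteq> 0 \<Longrightarrow> even x = even y) \<Longrightarrow> sgn x * P = sgn y * (P'::complex)"
  by (cases "P = 0") (auto simp: sgn_if)
lemma skron1: "kron x y * (sgn z * b) = sgn z * (kron x y * b)" by (simp add: mult_ac)
lemma skron2: "kron x y * sgn z = sgn z * kron x y" by (simp add: mult_ac)
lemma kron_nz: "kron x y \<noteq> 0 \<Longrightarrow> x = y" by (simp add: kron_def split: if_splits)

locale GH =
  fixes deg :: "'i::finite \<Rightarrow> nat" and m mu :: "'i \<Rightarrow> 'i \<Rightarrow> 'i \<Rightarrow> complex"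
    and u eps :: "'i \<Rightarrow> complex" and S Sinv :: "'i \<Rightarrow> 'i \<Rightarrow> complex"
  assumes hopf: "graded_hopf deg m u mu eps S" and inv: "inverse_coeffs S Sinv"
begin

lemma sm1: "m x y w * (sgn z * b) = sgn z * (m x y w * b)" by (simp add: mult_ac)
lemma sm2: "m x y w * sgn z = sgn z * m x y w" by (simp add: mult_ac)
lemma smu1: "mu x y w * (sgn z * b) = sgn z * (mu x y w * b)" by (simp add: mult_ac)
lemma smu2: "mu x y w * sgn z = sgn z * mu x y w" by (simp add: mult_ac)
lemma su1: "u x * (sgn z * b) = sgn z * (u x * b)" by (simp add: mult_ac)
lemma su2: "u x * sgn z = sgn z * u x" by (simp add: mult_ac)
lemma seps1: "eps x * (sgn z * b) = sgn z * (eps x * b)" by (simp add: mult_ac)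
lemma seps2: "eps x * sgn z = sgn z * eps x" by (simp add: mult_ac)
lemma sS1: "S x y * (sgn z * b) = sgn z * (S x y * b)" by (simp add: mult_ac)
lemma sS2: "S x y * sgn z = sgn z * S x y" by (simp add: mult_ac)
lemma sSi1: "Sinv x y * (sgn z * b) = sgn z * (Sinv x y * b)" by (simp add: mult_ac)
lemma sSi2: "Sinv x y * sgn z = sgn z * Sinv x y" by (simp add: mult_ac)
lemmas sgn_norm = mult.assoc sR3 sR4 skron1 skron2 sm1 sm2 smu1 smu2 su1 su2 seps1 seps2 sS1 sS2 sSi1 sSi2

lemma m_hom: "m g a b \<noteq> 0 \<Longrightarrow> even (deg g + deg a + deg b)" using hopf[unfolded graded_hopf_def, THEN conjunct1] by blast
lemma mu_hom: "mu a b c \<noteq> 0 \<Longrightarrow> even (deg a + deg b + deg c)" using hopf[unfolded graded_hopf_def, THEN conjunct2, THEN conjunct1] by blast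
lemma u_hom: "u a \<noteq> 0 \<Longrightarrow> even (deg a)" using hopf unfolding graded_hopf_def by simp
lemma eps_hom: "eps a \<noteq> 0 \<Longrightarrow> even (deg a)" using hopf unfolding graded_hopf_def by simp
lemma S_hom: "S a b \<noteq> 0 \<Longrightarrow> even (deg a + deg b)" using hopf unfolding graded_hopf_def by simp
lemma m_assoc: "(\<Sum>k\<in>UNIV. m k a b * m d k c) = (\<Sum>k\<in>UNIV. m k b c * m d a k)" using hopf unfolding graded_hopf_def by simp
lemma unit_l: "(\<Sum>k\<in>UNIV. u k * m d k a) = kron d a" using hopf unfolding graded_hopf_def by simp
lemma unit_r: "(\<Sum>k\<in>UNIV. u k * m d a k) = kron d a" using hopf unfolding graded_hopf_def by simp
lemma coassoc: "(\<Sum>k\<in>UNIV. mu a k c * mu k r s) = (\<Sum>k\<in>UNIV. mu a r k * mu k s c)" using hopf unfolding graded_hopf_def by simp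
lemma counit_l: "(\<Sum>b\<in>UNIV. eps b * mu a b c) = kron a c" using hopf unfolding graded_hopf_def by simp
lemma counit_r: "(\<Sum>c\<in>UNIV. eps c * mu a b c) = kron a b" using hopf unfolding graded_hopf_def by simp
lemma bialg: "(\<Sum>g\<in>UNIV. m g a b * mu g r s) =
       (\<Sum>r1\<in>UNIV. \<Sum>s1\<in>UNIV. \<Sum>r2\<in>UNIV. \<Sum>s2\<in>UNIV.
          sgn (deg s1 * deg r2) * mu a r1 s1 * mu b r2 s2 * m r r1 r2 * m s s1 s2)" using hopf unfolding graded_hopf_def by simp
lemma u_mu: "(\<Sum>g\<in>UNIV. u g * mu g r s) = u r * u s" using hopf unfolding graded_hopf_def by simp
lemma m_eps: "(\<Sum>g\<in>UNIV. m g a b * eps g) = eps a * eps b" using hopf unfolding graded_hopf_def by simp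
lemma u_eps: "(\<Sum>g\<in>UNIV. u g * eps g) = 1" using hopf unfolding graded_hopf_def by simp
lemma antip_l: "(\<Sum>b\<in>UNIV. \<Sum>c\<in>UNIV. \<Sum>k\<in>UNIV. mu a b c * S b k * m d k c) = eps a * u d" using hopf unfolding graded_hopf_def by simp
lemma antip_r: "(\<Sum>b\<in>UNIV. \<Sum>c\<in>UNIV. \<Sum>k\<in>UNIV. mu a b c * S c k * m d b k) = eps a * u d" using hopf unfolding graded_hopf_def by simp
lemma S_Sinv: "(\<Sum>k\<in>UNIV. S a k * Sinv k b) = kron a b" using inv unfolding inverse_coeffs_def by simp
lemma Sinv_S: "(\<Sum>k\<in>UNIV. Sinv a k * S k b) = kron a b" using inv unfolding inverse_coeffs_def by simp

definition pbA where "pbA x y z = sgn (deg x * deg y) * mu z x y"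

lemma ABA: "(\<Sum>k\<in>UNIV. pbA x y k * pbA k z w) = (\<Sum>k\<in>UNIV. pbA y z k * pbA x k w)"
proof -
  have "(\<Sum>k\<in>UNIV. pbA x y k * pbA k z w) = (\<Sum>k\<in>UNIV. sgn (deg x * deg y + deg y * deg z + deg x * deg z) * (mu w k z * mu k x y))"
    unfolding pbA_def
    apply (rule sum.cong[OF refl])
    subgoal for k
      apply (cases "mu w k z * mu k x y = 0")
       apply simp
      using mu_hom[of w k z] mu_hom[of k x y]
      apply (auto simp: sgn_if even_add even_mult_iff)
      done
    done
  also have "\<dots> = (\<Sum>k\<in>UNIV. sgn (deg x * deg y + deg y * deg z + deg x * deg z) * (mu w x k * mu k y z))"
    by (simp add: sum_distrib_left[symmetric] coassoc)
  also have "\<dots> = (\<Sum>k\<in>UNIV. pbA y z k * pbA x k w)"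
    unfolding pbA_def
    apply (rule sum.cong[OF refl])
    subgoal for k
      apply (cases "mu w x k * mu k y z = 0")
       apply simp
      using mu_hom[of w x k] mu_hom[of k y z]
      apply (auto simp: sgn_if even_add even_mult_iff)
      done
    done
  finally show ?thesis .
qed

lemma eq_cases0: "(A = 0 \<Longrightarrow> A = B) \<Longrightarrow> (A \<noteq> 0 \<Longrightarrow> A = B) \<Longrightarrow> A = (B::complex)" by blast

definition cA where "cA b g p r = (\<Sum>e\<in>UNIV. sgn (deg b * deg g + deg p * deg e + deg e) * m g p e * mu b e r)"

lemma CBA: "(\<Sum>k\<in>UNIV. pbA g g' k * cA b k p r) =
      (\<Sum>p1\<in>UNIV. \<Sum>r1\<in>UNIV. \<Sum>p2\<in>UNIV. cA b g p1 r1 * cA r1 g' p2 r * pbA p1 p2 p)"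
proof -
  have "(\<Sum>k\<in>UNIV. pbA g g' k * cA b k p r) = (\<Sum>e\<in>UNIV. sgn (deg g * deg g' + deg b * deg g + deg b * deg g' + deg p * deg e + deg e) * mu b e r *
     (\<Sum>k\<in>UNIV. m k p e * mu k g g'))"
    unfolding pbA_def cA_def
    apply (simp only: sum_distrib_left sum_distrib_right)?
    apply (simp only: sum.cartesian_product)
    apply (rule sum.reindex_bij_witness[of _ "\<lambda>(e,k). (k,e)" "\<lambda>(k,e). (e,k)"])
    apply auto[4]
    apply (simp only: split_paired_all prod.case)
    apply (rule sgn_start)
    apply (simp only: sgn_norm)
    apply ((rule sgn_eqI, simp add: mult_ac, (simp only: mult_eq_0_iff de_Morgan_disj)?, (elim conjE)?,
       ((drule m_hom | drule mu_hom)+)?, (simp only: even_add even_mult_iff ev01)?, argo?)?)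
    done
  also have "\<dots> = (\<Sum>e\<in>UNIV. sgn (deg g * deg g' + deg b * deg g + deg b * deg g' + deg p * deg e + deg e) * mu b e r *
     (\<Sum>r1\<in>UNIV. \<Sum>s1\<in>UNIV. \<Sum>r2\<in>UNIV. \<Sum>s2\<in>UNIV.
          sgn (deg s1 * deg r2) * mu p r1 s1 * mu e r2 s2 * m g r1 r2 * m g' s1 s2))"
    by (simp only: bialg)
  also have "\<dots> = (\<Sum>r1\<in>UNIV. \<Sum>s1\<in>UNIV. \<Sum>r2\<in>UNIV. \<Sum>s2\<in>UNIV.
     sgn (deg g * deg g' + deg b * deg g + deg b * deg g' + (deg p + 1) * (deg r2 + deg s2) + deg s1 * deg r2) *
     mu p r1 s1 * m g r1 r2 * m g' s1 s2 * (\<Sum>e\<in>UNIV. mu b e r * mu e r2 s2))"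
    apply (simp only: sum_distrib_left sum_distrib_right)?
    apply (simp only: sum.cartesian_product)
    apply (rule sum.reindex_bij_witness[of _ "\<lambda>(r1,s1,r2,s2,e). (e,r1,s1,r2,s2)" "\<lambda>(e,r1,s1,r2,s2). (r1,s1,r2,s2,e)"])
    apply auto[4]
    apply (simp only: split_paired_all prod.case)
    apply (rule sgn_start)
    apply (simp only: sgn_norm)
    apply ((rule sgn_eqI, simp add: mult_ac, (simp only: mult_eq_0_iff de_Morgan_disj)?, (elim conjE)?,
       ((drule m_hom | drule mu_hom)+)?, (simp only: even_add even_mult_iff ev01)?, argo?)?)
    done
  also have "\<dots> = (\<Sum>r1\<in>UNIV. \<Sum>s1\<in>UNIV. \<Sum>r2\<in>UNIV. \<Sum>s2\<in>UNIV.
     sgn (deg g * deg g' + deg b * deg g + deg b * deg g' + (deg p + 1) * (deg r2 + deg s2) + deg s1 * deg r2) *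
     mu p r1 s1 * m g r1 r2 * m g' s1 s2 * (\<Sum>k\<in>UNIV. mu b r2 k * mu k s2 r))"
    by (simp only: coassoc)
  also have "\<dots> = (\<Sum>p1\<in>UNIV. \<Sum>r1\<in>UNIV. \<Sum>p2\<in>UNIV. cA b g p1 r1 * cA r1 g' p2 r * pbA p1 p2 p)"
    unfolding cA_def pbA_def
    apply (simp only: sum_distrib_left sum_distrib_right)?
    apply (simp only: sum.cartesian_product)
    apply (rule sum.reindex_bij_witness[of _ "\<lambda>(r1,k,s1,s2,r2). (r1,s1,r2,s2,k)" "\<lambda>(r1,s1,r2,s2,k). (r1,k,s1,s2,r2)"])
    apply auto[4]
    apply (simp only: split_paired_all prod.case)
    apply (rule sgn_start)
    apply (simp only: sgn_norm)
    apply ((rule sgn_eqI, simp add: mult_ac, (simp only: mult_eq_0_iff de_Morgan_disj)?, (elim conjE)?,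
       ((drule m_hom | drule mu_hom)+)?, (simp only: even_add even_mult_iff ev01)?, argo?)?)
    done
  finally show ?thesis .
qed

definition pcA where "pcA r d t = m t r d"

lemma CCA: "(\<Sum>k\<in>UNIV. pcA b b' k * cA k g p r) =
      (\<Sum>p1\<in>UNIV. \<Sum>r1\<in>UNIV. \<Sum>r2\<in>UNIV. cA b' g p1 r1 * cA b p1 p r2 * pcA r2 r1 r)"
proof -
  have "(\<Sum>k\<in>UNIV. pcA b b' k * cA k g p r) = (\<Sum>e\<in>UNIV. sgn ((deg b + deg b') * deg g + deg p * deg e + deg e) * m g p e *
     (\<Sum>k\<in>UNIV. m k b b' * mu k e r))"
    unfolding pcA_def cA_def
    apply (simp only: sum_distrib_left sum_distrib_right)?
    apply (simp only: sum.cartesian_product)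
    apply (rule sum.reindex_bij_witness[of _ "\<lambda>(e,k). (k,e)" "\<lambda>(k,e). (e,k)"])
    apply auto[4]
    apply (simp only: split_paired_all prod.case)
    apply (rule sgn_start)
    apply (simp only: sgn_norm)
    apply ((rule sgn_eqI, simp add: mult_ac, (simp only: mult_eq_0_iff de_Morgan_disj)?, (elim conjE)?,
       ((drule m_hom | drule mu_hom)+)?, (simp only: even_add even_mult_iff ev01)?, argo?)?)
    done
  also have "\<dots> = (\<Sum>e\<in>UNIV. sgn ((deg b + deg b') * deg g + deg p * deg e + deg e) * m g p e *
     (\<Sum>r1\<in>UNIV. \<Sum>s1\<in>UNIV. \<Sum>r2\<in>UNIV. \<Sum>s2\<in>UNIV.
          sgn (deg s1 * deg r2) * mu b r1 s1 * mu b' r2 s2 * m e r1 r2 * m r s1 s2))"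
    by (simp only: bialg)
  also have "\<dots> = (\<Sum>r1\<in>UNIV. \<Sum>s1\<in>UNIV. \<Sum>r2\<in>UNIV. \<Sum>s2\<in>UNIV.
     sgn ((deg b + deg b') * deg g + (deg p + 1) * (deg r1 + deg r2) + deg s1 * deg r2) *
     mu b r1 s1 * mu b' r2 s2 * m r s1 s2 * (\<Sum>e\<in>UNIV. m e r1 r2 * m g p e))"
    apply (simp only: sum_distrib_left sum_distrib_right)?
    apply (simp only: sum.cartesian_product)
    apply (rule sum.reindex_bij_witness[of _ "\<lambda>(r1,s1,r2,s2,e). (e,r1,s1,r2,s2)" "\<lambda>(e,r1,s1,r2,s2). (r1,s1,r2,s2,e)"])
    apply auto[4]
    apply (simp only: split_paired_all prod.case)
    apply (rule sgn_start)
    apply (simp only: sgn_norm)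
    apply ((rule sgn_eqI, simp add: mult_ac, (simp only: mult_eq_0_iff de_Morgan_disj)?, (elim conjE)?,
       ((drule m_hom | drule mu_hom)+)?, (simp only: even_add even_mult_iff ev01)?, argo?)?)
    done
  also have "\<dots> = (\<Sum>r1\<in>UNIV. \<Sum>s1\<in>UNIV. \<Sum>r2\<in>UNIV. \<Sum>s2\<in>UNIV.
     sgn ((deg b + deg b') * deg g + (deg p + 1) * (deg r1 + deg r2) + deg s1 * deg r2) *
     mu b r1 s1 * mu b' r2 s2 * m r s1 s2 * (\<Sum>k\<in>UNIV. m k p r1 * m g k r2))"
    by (simp only: m_assoc[symmetric])
  also have "\<dots> = (\<Sum>p1\<in>UNIV. \<Sum>r1\<in>UNIV. \<Sum>r2\<in>UNIV. cA b' g p1 r1 * cA b p1 p r2 * pcA r2 r1 r)"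
    unfolding cA_def pcA_def
    apply (simp only: sum_distrib_left sum_distrib_right)?
    apply (simp only: sum.cartesian_product)
    apply (rule sum.reindex_bij_witness[of _ "\<lambda>(k,s2,s1,r1,r2). (r1,s1,r2,s2,k)" "\<lambda>(r1,s1,r2,s2,k). (k,s2,s1,r1,r2)"])
    apply auto[4]
    apply (simp only: split_paired_all prod.case)
    apply (rule sgn_start)
    apply (simp only: sgn_norm)
    apply ((rule sgn_eqI, simp add: mult_ac, (simp only: mult_eq_0_iff de_Morgan_disj)?, (elim conjE)?,
       ((drule m_hom | drule mu_hom)+)?, (simp only: even_add even_mult_iff ev01)?, argo?)?)
    done
  finally show ?thesis .
qed

lemma HA_tw: "HA_const deg m mu = tw pbA pcA cA"
proof (intro ext)
  fix x y z :: "'i \<times> 'i"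
  obtain al be where x: "x = (al,be)" by fastforce
  obtain ga de where y: "y = (ga,de)" by fastforce
  obtain s t where z: "z = (s,t)" by fastforce
  show "HA_const deg m mu x y z = tw pbA pcA cA x y z"
    unfolding x y z HA_const_def tw_def cA_def pbA_def pcA_def
    apply (simp only: prod.case)
    apply (simp only: sum_distrib_left sum_distrib_right)?
    apply (simp only: sum.cartesian_product)
    apply (rule sum.reindex_bij_witness[of _ "\<lambda>(p,r,e). (p,e,r)" "\<lambda>(p,e,r). (p,r,e)"])
    apply auto[4]
    apply (simp only: split_paired_all prod.case)
    apply (rule sgn_start)
    apply (simp only: sgn_norm)
    apply ((rule sgn_eqI, simp add: mult_ac, (simp only: mult_eq_0_iff de_Morgan_disj)?, (elim conjE)?,
       ((drule m_hom | drule mu_hom)+)?, (simp only: even_add even_mult_iff ev01)?, argo?)?)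
    done
qed
end

lemma sum_nz: "sum f A \<noteq> (0::complex) \<Longrightarrow> \<exists>x\<in>A. f x \<noteq> 0" by (metis sum.neutral)

context GH begin

definition pbS where "pbS a r s = m s a r"
definition pcS where "pcS p d t = sgn (deg p * deg d) * mu t p d"
definition cS where "cS b g r p = (\<Sum>e\<in>UNIV. sgn (deg r * deg p + deg r * deg e) * mu g r e * m b e p)"

lemma ABS: "(\<Sum>k\<in>UNIV. pbS x y k * pbS k z w) = (\<Sum>k\<in>UNIV. pbS y z k * pbS x k w)"
  unfolding pbS_def by (rule m_assoc)

lemma ACS: "(\<Sum>k\<in>UNIV. pcS x y k * pcS k z w) = (\<Sum>k\<in>UNIV. pcS y z k * pcS x k w)"
  using ABA[of x y z w] unfolding pcS_def pbA_def .

lemma CBS: "(\<Sum>k\<in>UNIV. pbS g g' k * cS b k r p) =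
      (\<Sum>p1\<in>UNIV. \<Sum>r1\<in>UNIV. \<Sum>p2\<in>UNIV. cS b g p1 r1 * cS r1 g' p2 p * pbS p1 p2 r)"
proof -
  have "(\<Sum>k\<in>UNIV. pbS g g' k * cS b k r p) = (\<Sum>e\<in>UNIV. sgn (deg r * deg p + deg r * deg e) * m b e p *
     (\<Sum>k\<in>UNIV. m k g g' * mu k r e))"
    unfolding pbS_def cS_def
    apply (simp only: sum_distrib_left sum_distrib_right)?
    apply (simp only: sum.cartesian_product)
    apply (rule sum.reindex_bij_witness[of _ "\<lambda>(e,k). (k,e)" "\<lambda>(k,e). (e,k)"])
    apply auto[4]
    apply (simp only: split_paired_all prod.case)
    apply (rule sgn_start)
    apply (simp only: sgn_norm)
    apply ((rule sgn_eqI, simp add: mult_ac, (simp only: mult_eq_0_iff de_Morgan_disj)?, (elim conjE)?,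
       ((drule m_hom | drule mu_hom)+)?, (simp only: even_add even_mult_iff ev01)?, argo?)?)
    done
  also have "\<dots> = (\<Sum>e\<in>UNIV. sgn (deg r * deg p + deg r * deg e) * m b e p *
     (\<Sum>r1\<in>UNIV. \<Sum>s1\<in>UNIV. \<Sum>r2\<in>UNIV. \<Sum>s2\<in>UNIV.
          sgn (deg s1 * deg r2) * mu g r1 s1 * mu g' r2 s2 * m r r1 r2 * m e s1 s2))"
    by (simp only: bialg)
  also have "\<dots> = (\<Sum>r1\<in>UNIV. \<Sum>s1\<in>UNIV. \<Sum>r2\<in>UNIV. \<Sum>s2\<in>UNIV.
     sgn (deg r * deg p + deg r * (deg s1 + deg s2) + deg s1 * deg r2) *
     mu g r1 s1 * mu g' r2 s2 * m r r1 r2 * (\<Sum>e\<in>UNIV. m e s1 s2 * m b e p))"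
    apply (simp only: sum_distrib_left sum_distrib_right)?
    apply (simp only: sum.cartesian_product)
    apply (rule sum.reindex_bij_witness[of _ "\<lambda>(r1,s1,r2,s2,e). (e,r1,s1,r2,s2)" "\<lambda>(e,r1,s1,r2,s2). (r1,s1,r2,s2,e)"])
    apply auto[4]
    apply (simp only: split_paired_all prod.case)
    apply (rule sgn_start)
    apply (simp only: sgn_norm)
    apply ((rule sgn_eqI, simp add: mult_ac, (simp only: mult_eq_0_iff de_Morgan_disj)?, (elim conjE)?,
       ((drule m_hom | drule mu_hom)+)?, (simp only: even_add even_mult_iff ev01)?, argo?)?)
    done
  also have "\<dots> = (\<Sum>r1\<in>UNIV. \<Sum>s1\<in>UNIV. \<Sum>r2\<in>UNIV. \<Sum>s2\<in>UNIV.
     sgn (deg r * deg p + deg r * (deg s1 + deg s2) + deg s1 * deg r2) *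
     mu g r1 s1 * mu g' r2 s2 * m r r1 r2 * (\<Sum>k\<in>UNIV. m k s2 p * m b s1 k))"
    by (simp only: m_assoc)
  also have "\<dots> = (\<Sum>p1\<in>UNIV. \<Sum>r1\<in>UNIV. \<Sum>p2\<in>UNIV. cS b g p1 r1 * cS r1 g' p2 p * pbS p1 p2 r)"
    unfolding cS_def pbS_def
    apply (simp only: sum_distrib_left sum_distrib_right)?
    apply (simp only: sum.cartesian_product)
    apply (rule sum.reindex_bij_witness[of _ "\<lambda>(r1,k,r2,s2,s1). (r1,s1,r2,s2,k)" "\<lambda>(r1,s1,r2,s2,k). (r1,k,r2,s2,s1)"])
    apply auto[4]
    apply (simp only: split_paired_all prod.case)
    apply (rule sgn_start)
    apply (simp only: sgn_norm)
    apply ((rule sgn_eqI, simp add: mult_ac, (simp only: mult_eq_0_iff de_Morgan_disj)?, (elim conjE)?,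
       ((drule m_hom | drule mu_hom)+)?, (simp only: even_add even_mult_iff ev01)?, argo?)?)
    done
  finally show ?thesis .
qed

lemma CCS: "(\<Sum>k\<in>UNIV. pcS b b' k * cS k g r p) =
      (\<Sum>p1\<in>UNIV. \<Sum>r1\<in>UNIV. \<Sum>r2\<in>UNIV. cS b' g p1 r1 * cS b p1 r r2 * pcS r2 r1 p)"
proof -
  have "(\<Sum>k\<in>UNIV. pcS b b' k * cS k g r p) = (\<Sum>e\<in>UNIV. sgn (deg b * deg b' + deg r * deg p + deg r * deg e) * mu g r e *
     (\<Sum>k\<in>UNIV. m k e p * mu k b b'))"
    unfolding pcS_def cS_def
    apply (simp only: sum_distrib_left sum_distrib_right)?
    apply (simp only: sum.cartesian_product)
    apply (rule sum.reindex_bij_witness[of _ "\<lambda>(e,k). (k,e)" "\<lambda>(k,e). (e,k)"])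
    apply auto[4]
    apply (simp only: split_paired_all prod.case)
    apply (rule sgn_start)
    apply (simp only: sgn_norm)
    apply ((rule sgn_eqI, simp add: mult_ac, (simp only: mult_eq_0_iff de_Morgan_disj)?, (elim conjE)?,
       ((drule m_hom | drule mu_hom)+)?, (simp only: even_add even_mult_iff ev01)?, argo?)?)
    done
  also have "\<dots> = (\<Sum>e\<in>UNIV. sgn (deg b * deg b' + deg r * deg p + deg r * deg e) * mu g r e *
     (\<Sum>r1\<in>UNIV. \<Sum>s1\<in>UNIV. \<Sum>r2\<in>UNIV. \<Sum>s2\<in>UNIV.
          sgn (deg s1 * deg r2) * mu e r1 s1 * mu p r2 s2 * m b r1 r2 * m b' s1 s2))"
    by (simp only: bialg)
  also have "\<dots> = (\<Sum>r1\<in>UNIV. \<Sum>s1\<in>UNIV. \<Sum>r2\<in>UNIV. \<Sum>s2\<in>UNIV.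
     sgn (deg b * deg b' + deg r * deg p + deg r * (deg r1 + deg s1) + deg s1 * deg r2) *
     mu p r2 s2 * m b r1 r2 * m b' s1 s2 * (\<Sum>e\<in>UNIV. mu g r e * mu e r1 s1))"
    apply (simp only: sum_distrib_left sum_distrib_right)?
    apply (simp only: sum.cartesian_product)
    apply (rule sum.reindex_bij_witness[of _ "\<lambda>(r1,s1,r2,s2,e). (e,r1,s1,r2,s2)" "\<lambda>(e,r1,s1,r2,s2). (r1,s1,r2,s2,e)"])
    apply auto[4]
    apply (simp only: split_paired_all prod.case)
    apply (rule sgn_start)
    apply (simp only: sgn_norm)
    apply ((rule sgn_eqI, simp add: mult_ac, (simp only: mult_eq_0_iff de_Morgan_disj)?, (elim conjE)?,
       ((drule m_hom | drule mu_hom)+)?, (simp only: even_add even_mult_iff ev01)?, argo?)?)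
    done
  also have "\<dots> = (\<Sum>r1\<in>UNIV. \<Sum>s1\<in>UNIV. \<Sum>r2\<in>UNIV. \<Sum>s2\<in>UNIV.
     sgn (deg b * deg b' + deg r * deg p + deg r * (deg r1 + deg s1) + deg s1 * deg r2) *
     mu p r2 s2 * m b r1 r2 * m b' s1 s2 * (\<Sum>k\<in>UNIV. mu g k s1 * mu k r r1))"
    by (simp only: coassoc[symmetric])
  also have "\<dots> = (\<Sum>p1\<in>UNIV. \<Sum>r1\<in>UNIV. \<Sum>r2\<in>UNIV. cS b' g p1 r1 * cS b p1 r r2 * pcS r2 r1 p)"
    unfolding cS_def pcS_def
    apply (simp only: sum_distrib_left sum_distrib_right)?
    apply (simp only: sum.cartesian_product)
    apply (rule sum.reindex_bij_witness[of _ "\<lambda>(k,s2,r2,r1,s1). (r1,s1,r2,s2,k)" "\<lambda>(r1,s1,r2,s2,k). (k,s2,r2,r1,s1)"])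
    apply auto[4]
    apply (simp only: split_paired_all prod.case)
    apply (rule sgn_start)
    apply (simp only: sgn_norm)
    apply ((rule sgn_eqI, simp add: mult_ac, (simp only: mult_eq_0_iff de_Morgan_disj)?, (elim conjE)?,
       ((drule m_hom | drule mu_hom)+)?, (simp only: even_add even_mult_iff ev01)?, argo?)?)
    done
  finally show ?thesis .
qed

lemma HAs_tw: "HAs_const deg m mu = tw pbS pcS cS"
proof (intro ext)
  fix x y z :: "'i \<times> 'i"
  obtain al be where x: "x = (al,be)" by fastforce
  obtain ga de where y: "y = (ga,de)" by fastforce
  obtain s t where z: "z = (s,t)" by fastforce
  show "HAs_const deg m mu x y z = tw pbS pcS cS x y z"
    unfolding x y z HAs_const_def tw_def cS_def pbS_def pcS_def
    apply (simp only: prod.case)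
    apply (simp only: sum_distrib_left sum_distrib_right)?
    apply (simp only: sum.cartesian_product)
    apply (rule sum.reindex_bij_witness[of _ "\<lambda>(p,r,e). (r,e,p)" "\<lambda>(r,e,p). (p,r,e)"])
    apply auto[4]
    apply (simp only: split_paired_all prod.case)
    apply (rule sgn_start)
    apply (simp only: sgn_norm)
    apply ((rule sgn_eqI, simp add: mult_ac, (simp only: mult_eq_0_iff de_Morgan_disj)?, (elim conjE)?,
       ((drule m_hom | drule mu_hom)+)?, (simp only: even_add even_mult_iff ev01)?, argo?)?)
    done
qed

end

lemma kron_mult_l: "kron x y * z = (if x = y then z else 0)" by (simp add: kron_def)
lemma kron_mult_r: "z * kron x y = (if x = y then z else 0)" by (simp add: kron_def)
lemma if0_mult_l: "(if P then a else 0) * b = (if P then a * b else (0::complex))" by simp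
lemma if0_mult_r: "b * (if P then a else 0) = (if P then b * a else (0::complex))" by simp
lemma if0_if0: "(if P then (if Q then a else 0) else 0) = (if P \<and> Q then a else (0::complex))" by simp
lemma sum_if_c1: "(\<Sum>x\<in>(UNIV::'a::finite set). if x = a \<and> Q x then f x else 0) = (if Q a then f a else (0::complex))"
proof -
  have "(\<Sum>x\<in>(UNIV::'a::finite set). if x = a \<and> Q x then f x else 0) = (\<Sum>x\<in>UNIV. if x = a then (if Q x then f x else 0) else 0)"
    by (rule sum.cong) auto
  also have "\<dots> = (if Q a then f a else 0)"
    by (subst sum.delta) simp_all
  finally show ?thesis .
qed
lemma sum_if_out: "(\<Sum>x\<in>A. if P then f x else 0) = (if P then sum f A else (0::complex))"
  by simp
lemma sum_if_c2: "(\<Sum>x\<in>(UNIV::'a::finite set). if a = x \<and> Q x then f x else 0) = (if Q a then f a else (0::complex))"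
  by (rule trans[OF sum.cong[OF refl] sum_if_c1]) auto
lemma sum_if_c3: "(\<Sum>x\<in>(UNIV::'a::finite set). if Q x \<and> x = a then f x else 0) = (if Q a then f a else (0::complex))"
  by (rule trans[OF sum.cong[OF refl] sum_if_c1]) auto
lemma sum_if_c4: "(\<Sum>x\<in>(UNIV::'a::finite set). if Q x \<and> a = x then f x else 0) = (if Q a then f a else (0::complex))"
  by (rule trans[OF sum.cong[OF refl] sum_if_c1]) auto
lemmas kron_simps = sum_if_out sum_if_c1 sum_if_c2 sum_if_c3 sum_if_c4 kron_mult_l kron_mult_r if0_mult_l if0_mult_r if0_if0 sum.delta sum.delta' UNIV_I if_True

lemma sgn_cong: "even x = even y \<Longrightarrow> sgn x = sgn y" by (simp add: sgn_if)

lemma sc_assoc: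
  fixes c :: "'a::finite \<Rightarrow> 'a \<Rightarrow> 'a \<Rightarrow> complex"
  assumes A: "\<And>i j l z. (\<Sum>k\<in>UNIV. c i j k * c k l z) = (\<Sum>k\<in>UNIV. c j l k * c i k z)"
  shows "sc_mult c (sc_mult c x y) w = sc_mult c x (sc_mult c y w)"
proof (rule ext)
  fix z
  have "sc_mult c (sc_mult c x y) w z = (\<Sum>i\<in>UNIV. \<Sum>j\<in>UNIV. \<Sum>l\<in>UNIV. x i * y j * w l * (\<Sum>k\<in>UNIV. c i j k * c k l z))"
    unfolding sc_mult_def
    apply (simp only: sum_distrib_left sum_distrib_right)?
    apply (simp only: sum.cartesian_product)
    apply (rule sum.reindex_bij_witness[of _ "\<lambda>(i,j,l,k). (k,l,i,j)" "\<lambda>(k,l,i,j). (i,j,l,k)"])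
    apply auto[4]
    apply (simp only: split_paired_all prod.case)
    apply (simp add: mult_ac)
    done
  also have "\<dots> = (\<Sum>i\<in>UNIV. \<Sum>j\<in>UNIV. \<Sum>l\<in>UNIV. x i * y j * w l * (\<Sum>k\<in>UNIV. c j l k * c i k z))"
    by (simp only: A)
  also have "\<dots> = sc_mult c x (sc_mult c y w) z"
    unfolding sc_mult_def
    apply (simp only: sum_distrib_left sum_distrib_right)?
    apply (simp only: sum.cartesian_product)
    apply (rule sum.reindex_bij_witness[of _ "\<lambda>(i,k,j,l). (i,j,l,k)" "\<lambda>(i,j,l,k). (i,k,j,l)"])
    apply auto[4]
    apply (simp only: split_paired_all prod.case)
    apply (simp add: mult_ac)
    done
  finally show "sc_mult c (sc_mult c x y) w z = sc_mult c x (sc_mult c y w) z" .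
qed

context GH begin

lemma ACA: "(\<Sum>k\<in>UNIV. pcA x y k * pcA k z w) = (\<Sum>k\<in>UNIV. pcA y z k * pcA x k w)"
  unfolding pcA_def by (rule m_assoc)

lemma HA_assoc: "(\<Sum>k\<in>UNIV. HA_const deg m mu i j k * HA_const deg m mu k l z) = (\<Sum>k\<in>UNIV. HA_const deg m mu j l k * HA_const deg m mu i k z)"
  unfolding HA_tw by (rule tw_assoc[OF ABA ACA CBA CCA])

lemma HAs_assoc: "(\<Sum>k\<in>UNIV. HAs_const deg m mu i j k * HAs_const deg m mu k l z) = (\<Sum>k\<in>UNIV. HAs_const deg m mu j l k * HAs_const deg m mu i k z)"
  unfolding HAs_tw by (rule tw_assoc[OF ABS ACS CBS CCS])

definition dp :: "'i \<times> 'i \<Rightarrow> nat" where "dp x = deg (fst x) + deg (snd x)"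

lemma HA_hom: "HA_const deg m mu x y z \<noteq> 0 \<Longrightarrow> even (dp x + dp y + dp z)"
proof -
  obtain al be where x: "x = (al,be)" by fastforce
  obtain ga de where y: "y = (ga,de)" by fastforce
  obtain s t where z: "z = (s,t)" by fastforce
  assume "HA_const deg m mu x y z \<noteq> 0"
  then obtain p e r where "sgn (deg be * deg ga + deg p * deg e + deg p * deg al + deg e) *
       m ga p e * m t r de * mu be e r * mu s al p \<noteq> 0"
    unfolding x y z HA_const_def by (auto dest!: sum_nz)
  then show ?thesis unfolding x y z dp_def
    apply (simp only: mult_eq_0_iff de_Morgan_disj fst_conv snd_conv)
    apply (elim conjE)
    apply ((drule m_hom | drule mu_hom)+)?
    apply (simp only: even_add even_mult_iff ev01)
    apply argo
    done
qed

lemma HAs_hom: "HAs_const deg m mu x y z \<noteq> 0 \<Longrightarrow> even (dp x + dp y + dp z)"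
proof -
  obtain al be where x: "x = (al,be)" by fastforce
  obtain ga de where y: "y = (ga,de)" by fastforce
  obtain s t where z: "z = (s,t)" by fastforce
  assume "HAs_const deg m mu x y z \<noteq> 0"
  then obtain p e r where "sgn (deg r * deg p + deg r * deg e + deg p * deg de) *
       mu ga r e * mu t p de * m be e p * m s al r \<noteq> 0"
    unfolding x y z HAs_const_def by (auto dest!: sum_nz)
  then show ?thesis unfolding x y z dp_def
    apply (simp only: mult_eq_0_iff de_Morgan_disj fst_conv snd_conv)
    apply (elim conjE)
    apply ((drule m_hom | drule mu_hom)+)?
    apply (simp only: even_add even_mult_iff ev01)
    apply argo
    done
qed

definition cT where "cT q1 p2 p q = sgn (dp q1 * dp p2) * kron p2 p * kron q1 q"

lemma T_tw: "T_const deg m mu = tw (HA_const deg m mu) (HAs_const deg m mu) cT"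
proof (intro ext)
  fix x y z :: "('i \<times> 'i) \<times> ('i \<times> 'i)"
  obtain p1 q1 where x: "x = (p1,q1)" by (cases x) blast
  obtain p2 q2 where y: "y = (p2,q2)" by (cases y) blast
  obtain p q where z: "z = (p,q)" by (cases z) blast
  show "T_const deg m mu x y z = tw (HA_const deg m mu) (HAs_const deg m mu) cT x y z"
    unfolding x y z T_const_def tw_def cT_def dp_def
    by (simp add: kron_simps)
qed

lemma CBT: "(\<Sum>k\<in>UNIV. HA_const deg m mu g g' k * cT b k p r) =
      (\<Sum>p1\<in>UNIV. \<Sum>r1\<in>UNIV. \<Sum>p2\<in>UNIV. cT b g p1 r1 * cT r1 g' p2 r * HA_const deg m mu p1 p2 p)"
proof -
  have "(\<Sum>k\<in>UNIV. HA_const deg m mu g g' k * cT b k p r) = sgn (dp b * dp p) * kron b r * HA_const deg m mu g g' p"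
    unfolding cT_def by (simp add: kron_simps)
  also have "\<dots> = sgn (dp b * dp g + dp b * dp g') * kron b r * HA_const deg m mu g g' p"
    apply (cases "HA_const deg m mu g g' p = 0")
     apply simp
    apply (drule HA_hom)
    apply (rule arg_cong[where f="\<lambda>x. x * kron b r * HA_const deg m mu g g' p"])
    apply (rule sgn_cong)
    apply (simp only: even_add even_mult_iff)
    apply argo
    done
  also have "\<dots> = (\<Sum>p1\<in>UNIV. \<Sum>r1\<in>UNIV. \<Sum>p2\<in>UNIV. cT b g p1 r1 * cT r1 g' p2 r * HA_const deg m mu p1 p2 p)"
    unfolding cT_def by (simp add: kron_simps sgn_add)
  finally show ?thesis .
qed

lemma CCT: "(\<Sum>k\<in>UNIV. HAs_const deg m mu b b' k * cT k g p r) =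
      (\<Sum>p1\<in>UNIV. \<Sum>r1\<in>UNIV. \<Sum>r2\<in>UNIV. cT b' g p1 r1 * cT b p1 p r2 * HAs_const deg m mu r2 r1 r)"
proof -
  have "(\<Sum>k\<in>UNIV. HAs_const deg m mu b b' k * cT k g p r) = sgn (dp r * dp g) * kron g p * HAs_const deg m mu b b' r"
    unfolding cT_def by (simp add: kron_simps)
  also have "\<dots> = sgn (dp b' * dp g + dp b * dp g) * kron g p * HAs_const deg m mu b b' r"
    apply (cases "HAs_const deg m mu b b' r = 0")
     apply simp
    apply (drule HAs_hom)
    apply (rule arg_cong[where f="\<lambda>x. x * kron g p * HAs_const deg m mu b b' r"])
    apply (rule sgn_cong)
    apply (simp only: even_add even_mult_iff)
    apply argo
    done
  also have "\<dots> = (\<Sum>p1\<in>UNIV. \<Sum>r1\<in>UNIV. \<Sum>r2\<in>UNIV. cT b' g p1 r1 * cT b p1 p r2 * HAs_const deg m mu r2 r1 r)"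
    unfolding cT_def by (simp add: kron_simps sgn_add)
  finally show ?thesis .
qed

lemma T_assoc: "(\<Sum>k\<in>UNIV. T_const deg m mu i j k * T_const deg m mu k l z) = (\<Sum>k\<in>UNIV. T_const deg m mu j l k * T_const deg m mu i k z)"
  unfolding T_tw by (rule tw_assoc[OF HA_assoc HAs_assoc CBT CCT])

lemma T_sc_assoc: "sc_mult (T_const deg m mu) (sc_mult (T_const deg m mu) x y) w = sc_mult (T_const deg m mu) x (sc_mult (T_const deg m mu) y w)"
  by (rule sc_assoc[OF T_assoc])

end

context GH begin

abbreviation "HA \<equiv> HA_const deg m mu"
abbreviation "HAs \<equiv> HAs_const deg m mu"
abbreviation "TT \<equiv> T_const deg m mu"

definition Xv where "Xv be = (\<lambda>(s,t). eps s * kron be t)"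
definition Yv where "Yv ga = (\<lambda>(k,l). kron ga k * eps l)"
definition Zv where "Zv be = (\<lambda>(s,t). kron be s * u t)"
definition Wv where "Wv ga = (\<lambda>(k,l). u k * kron ga l)"

lemma XX: "sc_mult HA (Xv b0) (Xv b1) = (\<lambda>(s,t). eps s * m t b0 b1)"
proof (intro ext, clarify)
  fix s t
  have "sc_mult HA (Xv b0) (Xv b1) (s,t) = (\<Sum>al\<in>UNIV. \<Sum>ga\<in>UNIV. eps al * eps ga * (\<Sum>p\<in>UNIV. \<Sum>e\<in>UNIV. \<Sum>r\<in>UNIV.
      sgn (deg b0 * deg ga + deg p * deg e + deg p * deg al + deg e) * m ga p e * m t r b1 * mu b0 e r * mu s al p))"
    unfolding sc_mult_def Xv_def HA_const_def sum_UNIV_pair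
    by (simp add: kron_simps sum_distrib_left mult_ac)
  also have "\<dots> = (\<Sum>p\<in>UNIV. \<Sum>e\<in>UNIV. \<Sum>r\<in>UNIV. m t r b1 * mu b0 e r * (\<Sum>ga\<in>UNIV. m ga p e * eps ga) * (\<Sum>al\<in>UNIV. eps al * mu s al p))"
    apply (simp only: sum_distrib_left sum_distrib_right)?
    apply (simp only: sum.cartesian_product)
    apply (rule sum.reindex_bij_witness[of _ "\<lambda>(p,e,r,al,ga). (al,ga,p,e,r)" "\<lambda>(al,ga,p,e,r). (p,e,r,al,ga)"])
    apply auto[4]
    apply (simp only: split_paired_all prod.case)
    apply (rule sgn_start)
    apply (simp only: sgn_norm)
    apply ((rule sgn_eqI, simp add: mult_ac, (simp only: mult_eq_0_iff de_Morgan_disj)?, (elim conjE)?,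
       ((drule m_hom | drule mu_hom | drule eps_hom | drule u_hom)+)?, (simp only: even_add even_mult_iff ev01)?, argo?)?)
    done
  also have "\<dots> = (\<Sum>p\<in>UNIV. \<Sum>e\<in>UNIV. \<Sum>r\<in>UNIV. m t r b1 * mu b0 e r * (eps p * eps e) * kron s p)"
    by (simp only: m_eps counit_l)
  also have "\<dots> = (\<Sum>r\<in>UNIV. m t r b1 * (\<Sum>e\<in>UNIV. eps e * mu b0 e r) * (\<Sum>p\<in>UNIV. eps p * kron s p))"
    apply (simp only: sum_distrib_left sum_distrib_right)?
    apply (simp only: sum.cartesian_product)
    apply (rule sum.reindex_bij_witness[of _ "\<lambda>(r,p,e). (p,e,r)" "\<lambda>(p,e,r). (r,p,e)"])
    apply auto[4]
    apply (simp only: split_paired_all prod.case)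
    apply (simp add: mult_ac)
    done
  also have "\<dots> = eps s * m t b0 b1"
    by (simp only: counit_l) (simp add: kron_simps mult_ac)
  finally show "sc_mult HA (Xv b0) (Xv b1) (s,t) = eps s * m t b0 b1" .
qed

lemma ZZ: "sc_mult HA (Zv b0) (Zv b1) = (\<lambda>(s,t). sgn (deg b0 * deg b1) * mu s b0 b1 * u t)"
proof (intro ext, clarify)
  fix s t
  have "sc_mult HA (Zv b0) (Zv b1) (s,t) = (\<Sum>be\<in>UNIV. \<Sum>de\<in>UNIV. u be * u de * (\<Sum>p\<in>UNIV. \<Sum>e\<in>UNIV. \<Sum>r\<in>UNIV. sgn (deg be * deg b1 + deg p * deg e + deg p * deg b0 + deg e) * m b1 p e * m t r de * mu be e r * mu s b0 p))"
        unfolding sc_mult_def Xv_def Yv_def Zv_def Wv_def HA_const_def HAs_const_def sum_UNIV_pair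
    by (simp add: kron_simps sum_distrib_left mult_ac)
  also have "\<dots> = (\<Sum>p\<in>UNIV. \<Sum>e\<in>UNIV. \<Sum>r\<in>UNIV. sgn (deg p * deg e + deg p * deg b0 + deg e) * m b1 p e * mu s b0 p * (\<Sum>de\<in>UNIV. u de * m t r de) * (\<Sum>be\<in>UNIV. u be * mu be e r))"
    apply (simp only: sum_distrib_left sum_distrib_right)?
    apply (simp only: sum.cartesian_product)
    apply (rule sum.reindex_bij_witness[of _ "\<lambda>(p,e,r,be,de). (be,de,p,e,r)" "\<lambda>(be,de,p,e,r). (p,e,r,be,de)"])
    apply auto[4]
    apply (simp only: split_paired_all prod.case)
    apply (rule sgn_start)
    apply (simp only: sgn_norm)
    apply ((rule sgn_eqI, simp add: mult_ac, (simp only: mult_eq_0_iff de_Morgan_disj)?, (elim conjE)?,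
       ((drule m_hom | drule mu_hom | drule eps_hom | drule u_hom)+)?, (simp only: even_add even_mult_iff ev01)?, argo?)?)
    done
  also have "\<dots> = (\<Sum>p\<in>UNIV. \<Sum>e\<in>UNIV. \<Sum>r\<in>UNIV. sgn (deg p * deg e + deg p * deg b0 + deg e) * m b1 p e * mu s b0 p * kron t r * (u e * u r))"
    by (simp only: unit_r u_mu)
  also have "\<dots> = (\<Sum>p\<in>UNIV. sgn (deg p * deg b0) * mu s b0 p * (\<Sum>e\<in>UNIV. u e * m b1 p e) * (\<Sum>r\<in>UNIV. u r * kron t r))"
    apply (simp only: sum_distrib_left sum_distrib_right)?
    apply (simp only: sum.cartesian_product)
    apply (rule sum.reindex_bij_witness[of _ "\<lambda>(p,r,e). (p,e,r)" "\<lambda>(p,e,r). (p,r,e)"])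
    apply auto[4]
    apply (simp only: split_paired_all prod.case)
    apply (rule sgn_start)
    apply (simp only: sgn_norm)
    apply ((rule sgn_eqI, simp add: mult_ac, (simp only: mult_eq_0_iff de_Morgan_disj)?, (elim conjE)?,
       ((drule m_hom | drule mu_hom | drule eps_hom | drule u_hom)+)?, (simp only: even_add even_mult_iff ev01)?, argo?)?)
    done
  also have "\<dots> = sgn (deg b0 * deg b1) * mu s b0 b1 * u t"
    by (simp only: unit_r) (simp add: kron_simps mult_ac)
  finally show "sc_mult HA (Zv b0) (Zv b1) (s,t) = sgn (deg b0 * deg b1) * mu s b0 b1 * u t" .
qed
definition bas2 where "bas2 x y = (\<lambda>(s,t). kron s x * kron t y)"

lemma ZX: "sc_mult HA (Zv b0) (Xv b1) = bas2 b0 b1"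
proof (intro ext, clarify)
  fix s t
  have "sc_mult HA (Zv b0) (Xv b1) (s,t) = (\<Sum>be\<in>UNIV. \<Sum>ga\<in>UNIV. u be * eps ga * (\<Sum>p\<in>UNIV. \<Sum>e\<in>UNIV. \<Sum>r\<in>UNIV. sgn (deg be * deg ga + deg p * deg e + deg p * deg b0 + deg e) * m ga p e * m t r b1 * mu be e r * mu s b0 p))"
        unfolding sc_mult_def Xv_def Yv_def Zv_def Wv_def HA_const_def HAs_const_def sum_UNIV_pair
    by (simp add: kron_simps sum_distrib_left mult_ac)
  also have "\<dots> = (\<Sum>p\<in>UNIV. \<Sum>e\<in>UNIV. \<Sum>r\<in>UNIV. sgn (deg p * deg e + deg p * deg b0 + deg e) * m t r b1 * mu s b0 p * (\<Sum>ga\<in>UNIV. m ga p e * eps ga) * (\<Sum>be\<in>UNIV. u be * mu be e r))"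
    apply (simp only: sum_distrib_left sum_distrib_right)?
    apply (simp only: sum.cartesian_product)
    apply (rule sum.reindex_bij_witness[of _ "\<lambda>(p,e,r,be,ga). (be,ga,p,e,r)" "\<lambda>(be,ga,p,e,r). (p,e,r,be,ga)"])
    apply auto[4]
    apply (simp only: split_paired_all prod.case)
    apply (rule sgn_start)
    apply (simp only: sgn_norm)
    apply ((rule sgn_eqI, simp add: mult_ac, (simp only: mult_eq_0_iff de_Morgan_disj)?, (elim conjE)?,
       ((drule m_hom | drule mu_hom | drule eps_hom | drule u_hom)+)?, (simp only: even_add even_mult_iff ev01)?, argo?)?)
    done
  also have "\<dots> = (\<Sum>p\<in>UNIV. \<Sum>e\<in>UNIV. \<Sum>r\<in>UNIV. sgn (deg p * deg e + deg p * deg b0 + deg e) * m t r b1 * mu s b0 p * (eps p * eps e) * (u e * u r))"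
    by (simp only: m_eps u_mu)
  also have "\<dots> = (\<Sum>r\<in>UNIV. u r * m t r b1) * (\<Sum>p\<in>UNIV. eps p * mu s b0 p) * (\<Sum>e\<in>UNIV. u e * eps e)"
    apply (simp only: sum_distrib_left sum_distrib_right)?
    apply (simp only: sum.cartesian_product)
    apply (rule sum.reindex_bij_witness[of _ "\<lambda>(e,p,r). (p,e,r)" "\<lambda>(p,e,r). (e,p,r)"])
    apply auto[4]
    apply (simp only: split_paired_all prod.case)
    apply (rule sgn_start)
    apply (simp only: sgn_norm)
    apply ((rule sgn_eqI, simp add: mult_ac, (simp only: mult_eq_0_iff de_Morgan_disj)?, (elim conjE)?,
       ((drule m_hom | drule mu_hom | drule eps_hom | drule u_hom)+)?, (simp only: even_add even_mult_iff ev01)?, argo?)?)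
    done
  also have "\<dots> = bas2 b0 b1 (s,t)"
    by (simp only: unit_l counit_r u_eps) (simp add: bas2_def kron_def)
  finally show "sc_mult HA (Zv b0) (Xv b1) (s,t) = bas2 b0 b1 (s,t)" by simp
qed
definition XZf where "XZf b0 b1 = (\<lambda>(x,y). \<Sum>e\<in>UNIV. sgn (deg b0 * deg b1 + deg x * deg e + deg e) * m b1 x e * mu b0 e y)"

lemma XZ: "sc_mult HA (Xv b0) (Zv b1) = XZf b0 b1"
proof (intro ext, clarify)
  fix s t
  have "sc_mult HA (Xv b0) (Zv b1) (s,t) = (\<Sum>al\<in>UNIV. \<Sum>de\<in>UNIV. eps al * u de * (\<Sum>p\<in>UNIV. \<Sum>e\<in>UNIV. \<Sum>r\<in>UNIV. sgn (deg b0 * deg b1 + deg p * deg e + deg p * deg al + deg e) * m b1 p e * m t r de * mu b0 e r * mu s al p))"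
        unfolding sc_mult_def Xv_def Yv_def Zv_def Wv_def HA_const_def HAs_const_def sum_UNIV_pair
    by (simp add: kron_simps sum_distrib_left mult_ac)
  also have "\<dots> = (\<Sum>p\<in>UNIV. \<Sum>e\<in>UNIV. \<Sum>r\<in>UNIV. sgn (deg b0 * deg b1 + deg p * deg e + deg e) * m b1 p e * mu b0 e r * (\<Sum>de\<in>UNIV. u de * m t r de) * (\<Sum>al\<in>UNIV. eps al * mu s al p))"
    apply (simp only: sum_distrib_left sum_distrib_right)?
    apply (simp only: sum.cartesian_product)
    apply (rule sum.reindex_bij_witness[of _ "\<lambda>(p,e,r,al,de). (al,de,p,e,r)" "\<lambda>(al,de,p,e,r). (p,e,r,al,de)"])
    apply auto[4]
    apply (simp only: split_paired_all prod.case)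
    apply (rule sgn_start)
    apply (simp only: sgn_norm)
    apply ((rule sgn_eqI, simp add: mult_ac, (simp only: mult_eq_0_iff de_Morgan_disj)?, (elim conjE)?,
       ((drule m_hom | drule mu_hom | drule eps_hom | drule u_hom)+)?, (simp only: even_add even_mult_iff ev01)?, argo?)?)
    done
  also have "\<dots> = (\<Sum>p\<in>UNIV. \<Sum>e\<in>UNIV. \<Sum>r\<in>UNIV. sgn (deg b0 * deg b1 + deg p * deg e + deg e) * m b1 p e * mu b0 e r * kron t r * kron s p)"
    by (simp only: unit_r counit_l)
  also have "\<dots> = XZf b0 b1 (s,t)"
    by (simp add: kron_simps XZf_def)
  finally show "sc_mult HA (Xv b0) (Zv b1) (s,t) = XZf b0 b1 (s,t)" by simp
qed
lemma YY: "sc_mult HAs (Yv g0) (Yv g1) = (\<lambda>(s,t). m s g0 g1 * eps t)"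
proof (intro ext, clarify)
  fix s t
  have "sc_mult HAs (Yv g0) (Yv g1) (s,t) = (\<Sum>be\<in>UNIV. \<Sum>de\<in>UNIV. eps be * eps de * (\<Sum>p\<in>UNIV. \<Sum>e\<in>UNIV. \<Sum>r\<in>UNIV. sgn (deg r * deg p + deg r * deg e + deg p * deg de) * mu g1 r e * mu t p de * m be e p * m s g0 r))"
        unfolding sc_mult_def Xv_def Yv_def Zv_def Wv_def HA_const_def HAs_const_def sum_UNIV_pair
    by (simp add: kron_simps sum_distrib_left mult_ac)
  also have "\<dots> = (\<Sum>p\<in>UNIV. \<Sum>e\<in>UNIV. \<Sum>r\<in>UNIV. mu g1 r e * m s g0 r * (\<Sum>de\<in>UNIV. eps de * mu t p de) * (\<Sum>be\<in>UNIV. m be e p * eps be))"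
    apply (simp only: sum_distrib_left sum_distrib_right)?
    apply (simp only: sum.cartesian_product)
    apply (rule sum.reindex_bij_witness[of _ "\<lambda>(p,e,r,be,de). (be,de,p,e,r)" "\<lambda>(be,de,p,e,r). (p,e,r,be,de)"])
    apply auto[4]
    apply (simp only: split_paired_all prod.case)
    apply (rule sgn_start)
    apply (simp only: sgn_norm)
    apply ((rule sgn_eqI, simp add: mult_ac, (simp only: mult_eq_0_iff de_Morgan_disj)?, (elim conjE)?,
       ((drule m_hom | drule mu_hom | drule eps_hom | drule u_hom)+)?, (simp only: even_add even_mult_iff ev01)?, argo?)?)
    done
  also have "\<dots> = (\<Sum>p\<in>UNIV. \<Sum>e\<in>UNIV. \<Sum>r\<in>UNIV. mu g1 r e * m s g0 r * kron t p * (eps e * eps p))"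
    by (simp only: counit_r m_eps)
  also have "\<dots> = (\<Sum>r\<in>UNIV. m s g0 r * (\<Sum>e\<in>UNIV. eps e * mu g1 r e) * (\<Sum>p\<in>UNIV. eps p * kron t p))"
    apply (simp only: sum_distrib_left sum_distrib_right)?
    apply (simp only: sum.cartesian_product)
    apply (rule sum.reindex_bij_witness[of _ "\<lambda>(r,p,e). (p,e,r)" "\<lambda>(p,e,r). (r,p,e)"])
    apply auto[4]
    apply (simp only: split_paired_all prod.case)
    apply (simp add: mult_ac)
    done
  also have "\<dots> = m s g0 g1 * eps t"
    by (simp only: counit_r) (simp add: kron_simps mult_ac)
  finally show "sc_mult HAs (Yv g0) (Yv g1) (s,t) = m s g0 g1 * eps t" .
qed
lemma WW: "sc_mult HAs (Wv g0) (Wv g1) = (\<lambda>(s,t). sgn (deg g0 * deg g1) * mu t g0 g1 * u s)"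
proof (intro ext, clarify)
  fix s t
  have "sc_mult HAs (Wv g0) (Wv g1) (s,t) = (\<Sum>al\<in>UNIV. \<Sum>ga\<in>UNIV. u al * u ga * (\<Sum>p\<in>UNIV. \<Sum>e\<in>UNIV. \<Sum>r\<in>UNIV. sgn (deg r * deg p + deg r * deg e + deg p * deg g1) * mu ga r e * mu t p g1 * m g0 e p * m s al r))"
        unfolding sc_mult_def Xv_def Yv_def Zv_def Wv_def HA_const_def HAs_const_def sum_UNIV_pair
    by (simp add: kron_simps sum_distrib_left mult_ac)
  also have "\<dots> = (\<Sum>p\<in>UNIV. \<Sum>e\<in>UNIV. \<Sum>r\<in>UNIV. sgn (deg r * deg p + deg r * deg e + deg p * deg g1) * mu t p g1 * m g0 e p * (\<Sum>al\<in>UNIV. u al * m s al r) * (\<Sum>ga\<in>UNIV. u ga * mu ga r e))"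
    apply (simp only: sum_distrib_left sum_distrib_right)?
    apply (simp only: sum.cartesian_product)
    apply (rule sum.reindex_bij_witness[of _ "\<lambda>(p,e,r,ga,al). (al,ga,p,e,r)" "\<lambda>(al,ga,p,e,r). (p,e,r,ga,al)"])
    apply auto[4]
    apply (simp only: split_paired_all prod.case)
    apply (rule sgn_start)
    apply (simp only: sgn_norm)
    apply ((rule sgn_eqI, simp add: mult_ac, (simp only: mult_eq_0_iff de_Morgan_disj)?, (elim conjE)?,
       ((drule m_hom | drule mu_hom | drule eps_hom | drule u_hom)+)?, (simp only: even_add even_mult_iff ev01)?, argo?)?)
    done
  also have "\<dots> = (\<Sum>p\<in>UNIV. \<Sum>e\<in>UNIV. \<Sum>r\<in>UNIV. sgn (deg r * deg p + deg r * deg e + deg p * deg g1) * mu t p g1 * m g0 e p * kron s r * (u r * u e))"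
    by (simp only: unit_l u_mu)
  also have "\<dots> = (\<Sum>p\<in>UNIV. sgn (deg p * deg g1) * mu t p g1 * (\<Sum>e\<in>UNIV. u e * m g0 e p) * (\<Sum>r\<in>UNIV. u r * kron s r))"
    apply (simp only: sum_distrib_left sum_distrib_right)?
    apply (simp only: sum.cartesian_product)
    apply (rule sum.reindex_bij_witness[of _ "\<lambda>(p,r,e). (p,e,r)" "\<lambda>(p,e,r). (p,r,e)"])
    apply auto[4]
    apply (simp only: split_paired_all prod.case)
    apply (rule sgn_start)
    apply (simp only: sgn_norm)
    apply ((rule sgn_eqI, simp add: mult_ac, (simp only: mult_eq_0_iff de_Morgan_disj)?, (elim conjE)?,
       ((drule m_hom | drule mu_hom | drule eps_hom | drule u_hom)+)?, (simp only: even_add even_mult_iff ev01)?, argo?)?)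
    done
  also have "\<dots> = sgn (deg g0 * deg g1) * mu t g0 g1 * u s"
    by (simp only: unit_l) (simp add: kron_simps mult_ac)
  finally show "sc_mult HAs (Wv g0) (Wv g1) (s,t) = sgn (deg g0 * deg g1) * mu t g0 g1 * u s" .
qed
lemma YW: "sc_mult HAs (Yv g0) (Wv g1) = bas2 g0 g1"
proof (intro ext, clarify)
  fix s t
  have "sc_mult HAs (Yv g0) (Wv g1) (s,t) = (\<Sum>be\<in>UNIV. \<Sum>ga\<in>UNIV. eps be * u ga * (\<Sum>p\<in>UNIV. \<Sum>e\<in>UNIV. \<Sum>r\<in>UNIV. sgn (deg r * deg p + deg r * deg e + deg p * deg g1) * mu ga r e * mu t p g1 * m be e p * m s g0 r))"
        unfolding sc_mult_def Xv_def Yv_def Zv_def Wv_def HA_const_def HAs_const_def sum_UNIV_pair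
    by (simp add: kron_simps sum_distrib_left mult_ac)
  also have "\<dots> = (\<Sum>p\<in>UNIV. \<Sum>e\<in>UNIV. \<Sum>r\<in>UNIV. sgn (deg r * deg p + deg r * deg e + deg p * deg g1) * mu t p g1 * m s g0 r * (\<Sum>be\<in>UNIV. m be e p * eps be) * (\<Sum>ga\<in>UNIV. u ga * mu ga r e))"
    apply (simp only: sum_distrib_left sum_distrib_right)?
    apply (simp only: sum.cartesian_product)
    apply (rule sum.reindex_bij_witness[of _ "\<lambda>(p,e,r,ga,be). (be,ga,p,e,r)" "\<lambda>(be,ga,p,e,r). (p,e,r,ga,be)"])
    apply auto[4]
    apply (simp only: split_paired_all prod.case)
    apply (rule sgn_start)
    apply (simp only: sgn_norm)
    apply ((rule sgn_eqI, simp add: mult_ac, (simp only: mult_eq_0_iff de_Morgan_disj)?, (elim conjE)?,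
       ((drule m_hom | drule mu_hom | drule eps_hom | drule u_hom)+)?, (simp only: even_add even_mult_iff ev01)?, argo?)?)
    done
  also have "\<dots> = (\<Sum>p\<in>UNIV. \<Sum>e\<in>UNIV. \<Sum>r\<in>UNIV. sgn (deg r * deg p + deg r * deg e + deg p * deg g1) * mu t p g1 * m s g0 r * (eps e * eps p) * (u r * u e))"
    by (simp only: m_eps u_mu)
  also have "\<dots> = (\<Sum>r\<in>UNIV. u r * m s g0 r) * (\<Sum>p\<in>UNIV. eps p * mu t p g1) * (\<Sum>e\<in>UNIV. u e * eps e)"
    apply (simp only: sum_distrib_left sum_distrib_right)?
    apply (simp only: sum.cartesian_product)
    apply (rule sum.reindex_bij_witness[of _ "\<lambda>(e,p,r). (p,e,r)" "\<lambda>(p,e,r). (e,p,r)"])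
    apply auto[4]
    apply (simp only: split_paired_all prod.case)
    apply (rule sgn_start)
    apply (simp only: sgn_norm)
    apply ((rule sgn_eqI, simp add: mult_ac, (simp only: mult_eq_0_iff de_Morgan_disj)?, (elim conjE)?,
       ((drule m_hom | drule mu_hom | drule eps_hom | drule u_hom)+)?, (simp only: even_add even_mult_iff ev01)?, argo?)?)
    done
  also have "\<dots> = bas2 g0 g1 (s,t)"
    by (simp only: unit_r counit_l u_eps) (simp add: bas2_def kron_def)
  finally show "sc_mult HAs (Yv g0) (Wv g1) (s,t) = bas2 g0 g1 (s,t)" by simp
qed
definition WYf where "WYf g0 g1 = (\<lambda>(s,t). \<Sum>e\<in>UNIV. sgn (deg s * deg t + deg s * deg e) * mu g1 s e * m g0 e t)"

lemma WY: "sc_mult HAs (Wv g0) (Yv g1) = WYf g0 g1"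
proof (intro ext, clarify)
  fix s t
  have "sc_mult HAs (Wv g0) (Yv g1) (s,t) = (\<Sum>al\<in>UNIV. \<Sum>de\<in>UNIV. u al * eps de * (\<Sum>p\<in>UNIV. \<Sum>e\<in>UNIV. \<Sum>r\<in>UNIV. sgn (deg r * deg p + deg r * deg e + deg p * deg de) * mu g1 r e * mu t p de * m g0 e p * m s al r))"
        unfolding sc_mult_def Xv_def Yv_def Zv_def Wv_def HA_const_def HAs_const_def sum_UNIV_pair
    by (simp add: kron_simps sum_distrib_left mult_ac)
  also have "\<dots> = (\<Sum>p\<in>UNIV. \<Sum>e\<in>UNIV. \<Sum>r\<in>UNIV. sgn (deg r * deg p + deg r * deg e) * mu g1 r e * m g0 e p * (\<Sum>al\<in>UNIV. u al * m s al r) * (\<Sum>de\<in>UNIV. eps de * mu t p de))"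
    apply (simp only: sum_distrib_left sum_distrib_right)?
    apply (simp only: sum.cartesian_product)
    apply (rule sum.reindex_bij_witness[of _ "\<lambda>(p,e,r,de,al). (al,de,p,e,r)" "\<lambda>(al,de,p,e,r). (p,e,r,de,al)"])
    apply auto[4]
    apply (simp only: split_paired_all prod.case)
    apply (rule sgn_start)
    apply (simp only: sgn_norm)
    apply ((rule sgn_eqI, simp add: mult_ac, (simp only: mult_eq_0_iff de_Morgan_disj)?, (elim conjE)?,
       ((drule m_hom | drule mu_hom | drule eps_hom | drule u_hom)+)?, (simp only: even_add even_mult_iff ev01)?, argo?)?)
    done
  also have "\<dots> = (\<Sum>p\<in>UNIV. \<Sum>e\<in>UNIV. \<Sum>r\<in>UNIV. sgn (deg r * deg p + deg r * deg e) * mu g1 r e * m g0 e p * kron s r * kron t p)"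
    by (simp only: unit_l counit_r)
  also have "\<dots> = WYf g0 g1 (s,t)"
    by (simp add: kron_simps WYf_def)
  finally show "sc_mult HAs (Wv g0) (Yv g1) (s,t) = WYf g0 g1 (s,t)" by simp
qed
end

definition ptens :: "('a \<Rightarrow> complex) \<Rightarrow> ('b \<Rightarrow> complex) \<Rightarrow> 'a \<times> 'b \<Rightarrow> complex" where
  "ptens x y = (\<lambda>(p,q). x p * y q)"

lemma sc_lin_l2: "sc_mult c (\<lambda>z. \<Sum>i\<in>UNIV. \<Sum>j\<in>UNIV. f i j * g i j z) y = (\<lambda>z. \<Sum>i\<in>UNIV. \<Sum>j\<in>UNIV. f i j * sc_mult c (g i j) y z)"
proof (rule ext)
  fix w
  show "sc_mult c (\<lambda>z. \<Sum>i\<in>UNIV. \<Sum>j\<in>UNIV. f i j * g i j z) y w = (\<Sum>i\<in>UNIV. \<Sum>j\<in>UNIV. f i j * sc_mult c (g i j) y w)"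
    unfolding sc_mult_def
    apply (simp only: sum_distrib_left sum_distrib_right)?
    apply (simp only: sum.cartesian_product)
    apply (rule sum.reindex_bij_witness[of _ "\<lambda>(i,j,i',j'). (i',j',i,j)" "\<lambda>(i',j',i,j). (i,j,i',j')"])
    apply auto[4]
    apply (simp only: split_paired_all prod.case)
    apply (simp add: mult_ac)
    done
qed

lemma sc_lin_r2: "sc_mult c x (\<lambda>z. \<Sum>i\<in>UNIV. \<Sum>j\<in>UNIV. f i j * g i j z) = (\<lambda>z. \<Sum>i\<in>UNIV. \<Sum>j\<in>UNIV. f i j * sc_mult c x (g i j) z)"
proof (rule ext)
  fix w
  show "sc_mult c x (\<lambda>z. \<Sum>i\<in>UNIV. \<Sum>j\<in>UNIV. f i j * g i j z) w = (\<Sum>i\<in>UNIV. \<Sum>j\<in>UNIV. f i j * sc_mult c x (g i j) w)"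
    unfolding sc_mult_def
    apply (simp only: sum_distrib_left sum_distrib_right)?
    apply (simp only: sum.cartesian_product)
    apply (rule sum.reindex_bij_witness[of _ "\<lambda>(i,j,i',j'). (i',j',i,j)" "\<lambda>(i',j',i,j). (i,j,i',j')"])
    apply auto[4]
    apply (simp only: split_paired_all prod.case)
    apply (simp add: mult_ac)
    done
qed

lemma sc_lin_l1: "sc_mult c (\<lambda>z. \<Sum>i\<in>UNIV. f i * g i z) y = (\<lambda>z. \<Sum>i\<in>UNIV. f i * sc_mult c (g i) y z)"
proof (rule ext)
  fix w
  show "sc_mult c (\<lambda>z. \<Sum>i\<in>UNIV. f i * g i z) y w = (\<Sum>i\<in>UNIV. f i * sc_mult c (g i) y w)"
    unfolding sc_mult_def
    apply (simp only: sum_distrib_left sum_distrib_right)?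
    apply (simp only: sum.cartesian_product)
    apply (rule sum.reindex_bij_witness[of _ "\<lambda>(i,i',j'). (i',j',i)" "\<lambda>(i',j',i). (i,i',j')"])
    apply auto[4]
    apply (simp only: split_paired_all prod.case)
    apply (simp add: mult_ac)
    done
qed

lemma sc_lin_r1: "sc_mult c x (\<lambda>z. \<Sum>i\<in>UNIV. f i * g i z) = (\<lambda>z. \<Sum>i\<in>UNIV. f i * sc_mult c x (g i) z)"
proof (rule ext)
  fix w
  show "sc_mult c x (\<lambda>z. \<Sum>i\<in>UNIV. f i * g i z) w = (\<Sum>i\<in>UNIV. f i * sc_mult c x (g i) w)"
    unfolding sc_mult_def
    apply (simp only: sum_distrib_left sum_distrib_right)?
    apply (simp only: sum.cartesian_product)
    apply (rule sum.reindex_bij_witness[of _ "\<lambda>(i,i',j'). (i',j',i)" "\<lambda>(i',j',i). (i,i',j')"])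
    apply auto[4]
    apply (simp only: split_paired_all prod.case)
    apply (simp add: mult_ac)
    done
qed

context GH begin

definition hom :: "nat \<Rightarrow> ('i \<times> 'i \<Rightarrow> complex) \<Rightarrow> bool" where
  "hom d v \<longleftrightarrow> (\<forall>p. v p \<noteq> 0 \<longrightarrow> even (dp p + d))"

lemma ptens_mult:
  assumes hy: "hom dy y" and hx: "hom dx x'"
  shows "sc_mult TT (ptens x y) (ptens x' y') = (\<lambda>z. sgn (dy * dx) * ptens (sc_mult HA x x') (sc_mult HAs y y') z)"
proof (intro ext, clarify)
  fix p q
  have "sc_mult TT (ptens x y) (ptens x' y') (p,q) = (\<Sum>i1\<in>UNIV. \<Sum>i2\<in>UNIV. \<Sum>j1\<in>UNIV. \<Sum>j2\<in>UNIV.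
     x i1 * y i2 * (x' j1 * y' j2) * (sgn (dp i2 * dp j1) * HA i1 j1 p * HAs i2 j2 q))"
    unfolding sc_mult_def sum_UNIV_pair[of "\<lambda>i. _ i"] ptens_def T_const_def dp_def by simp
  also have "\<dots> = (\<Sum>i1\<in>UNIV. \<Sum>i2\<in>UNIV. \<Sum>j1\<in>UNIV. \<Sum>j2\<in>UNIV.
     sgn (dy * dx) * (x i1 * x' j1 * HA i1 j1 p) * (y i2 * y' j2 * HAs i2 j2 q))"
  proof -
    have pw: "x i1 * y i2 * (x' j1 * y' j2) * (sgn (dp i2 * dp j1) * HA i1 j1 p * HAs i2 j2 q) =
      sgn (dy * dx) * (x i1 * x' j1 * HA i1 j1 p) * (y i2 * y' j2 * HAs i2 j2 q)" for i1 i2 j1 j2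
    proof (cases "y i2 = 0 \<or> x' j1 = 0")
      case True then show ?thesis by auto
    next
      case False
      then have "even (dp i2 + dy)" "even (dp j1 + dx)" using hy[unfolded hom_def, rule_format, of i2] hx[unfolded hom_def, rule_format, of j1] by auto
      then have "sgn (dp i2 * dp j1) = sgn (dy * dx)" by (intro sgn_cong) (auto simp: even_add even_mult_iff)
      then show ?thesis by (simp add: mult_ac)
    qed
    show ?thesis by (simp only: pw)
  qed
  also have "\<dots> = (\<Sum>i2\<in>UNIV. \<Sum>i1\<in>UNIV. \<Sum>j2\<in>UNIV. \<Sum>j1\<in>UNIV.
     sgn (dy * dx) * (x i1 * x' j1 * HA i1 j1 p) * (y i2 * y' j2 * HAs i2 j2 q))"
    apply (simp only: sum.cartesian_product)
    apply (rule sum.reindex_bij_witness[of _ "\<lambda>(i2,i1,j2,j1). (i1,i2,j1,j2)" "\<lambda>(i1,i2,j1,j2). (i2,i1,j2,j1)"])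
    apply auto
    done
  also have "\<dots> = sgn (dy * dx) * ptens (sc_mult HA x x') (sc_mult HAs y y') (p,q)"
    unfolding ptens_def sc_mult_def
    by (simp add: sum_distrib_left sum_distrib_right mult_ac)
  finally show "sc_mult TT (ptens x y) (ptens x' y') (p,q) = sgn (dy * dx) * ptens (sc_mult HA x x') (sc_mult HAs y y') (p,q)" .
qed

lemma hom_X: "hom (deg be) (Xv be)" unfolding hom_def Xv_def dp_def by (auto dest!: eps_hom kron_nz)
lemma hom_Y: "hom (deg be) (Yv be)" unfolding hom_def Yv_def dp_def by (auto dest!: eps_hom kron_nz)
lemma hom_Z: "hom (deg be) (Zv be)" unfolding hom_def Zv_def dp_def by (auto dest!: u_hom kron_nz)
lemma hom_W: "hom (deg be) (Wv be)" unfolding hom_def Wv_def dp_def by (auto dest!: u_hom kron_nz)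

end

locale GH2 = GH +
  fixes a b a' b' :: nat
  assumes pa: "odd (a + a')" and pb: "even (b + b')"
begin

definition Lv where "Lv al = eta_L deg mu eps a b al"
definition Rv where "Rv be = eta_R deg m u a' b' be"

lemma L_exp: "Lv al = (\<lambda>z. \<Sum>be\<in>UNIV. \<Sum>ga\<in>UNIV. (sgn (a * deg be + b * deg ga) * mu al be ga) * ptens (Xv be) (Yv ga) z)"
  unfolding Lv_def eta_L_def ptens_def Xv_def Yv_def by (intro ext) (auto simp: mult_ac)

lemma R_exp: "Rv al = (\<lambda>z. \<Sum>be\<in>UNIV. \<Sum>ga\<in>UNIV. (sgn (a' * deg be + b' * deg ga) * m al ga be) * ptens (Zv be) (Wv ga) z)"
  unfolding Rv_def eta_R_def ptens_def Zv_def Wv_def by (intro ext) (auto simp: mult_ac)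

lemma prod_exp:
  assumes hQ: "\<And>j. hom (dQ j) (Q j)" and hP: "\<And>i. hom (dP i) (P' i)"
  shows "sc_mult TT (\<lambda>z. \<Sum>i\<in>UNIV. \<Sum>j\<in>UNIV. f i j * ptens (P i) (Q j) z) (\<lambda>z. \<Sum>i'\<in>UNIV. \<Sum>j'\<in>UNIV. g i' j' * ptens (P' i') (Q' j') z) =
    (\<lambda>z. \<Sum>i\<in>UNIV. \<Sum>j\<in>UNIV. f i j * (\<Sum>i'\<in>UNIV. \<Sum>j'\<in>UNIV. g i' j' * (sgn (dQ j * dP i') * ptens (sc_mult HA (P i) (P' i')) (sc_mult HAs (Q j) (Q' j')) z)))"
  by (simp only: sc_lin_l2 sc_lin_r2 ptens_mult[OF hQ hP])

lemma L1: "sc_mult TT (Lv a1) (Lv a2) = (\<lambda>z. \<Sum>g\<in>UNIV. m g a1 a2 * Lv g z)"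
proof (intro ext, clarify)
  fix s t k l
  have "sc_mult TT (Lv a1) (Lv a2) ((s,t),(k,l)) = (\<Sum>be\<in>UNIV. \<Sum>ga\<in>UNIV. \<Sum>be'\<in>UNIV. \<Sum>ga'\<in>UNIV.
     sgn (a * deg be + b * deg ga) * mu a1 be ga * (sgn (a * deg be' + b * deg ga') * mu a2 be' ga' *
       (sgn (deg ga * deg be') * (eps s * m t be be' * (m k ga ga' * eps l)))))"
    unfolding L_exp[of a1] L_exp[of a2] prod_exp[OF hom_Y hom_X] XX YY
    by (simp add: ptens_def sum_distrib_left mult_ac)
  also have "\<dots> = (\<Sum>r1\<in>UNIV. \<Sum>s1\<in>UNIV. \<Sum>r2\<in>UNIV. \<Sum>s2\<in>UNIV.
     eps s * eps l * sgn (a * deg t + b * deg k) * (sgn (deg s1 * deg r2) * mu a1 r1 s1 * mu a2 r2 s2 * m t r1 r2 * m k s1 s2))"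
    apply (simp only: sum_distrib_left sum_distrib_right)?
    apply (simp only: sum.cartesian_product)
    apply (rule sum.reindex_bij_witness[of _ "\<lambda>(r1,s1,r2,s2). (r1,s1,r2,s2)" "\<lambda>(r1,s1,r2,s2). (r1,s1,r2,s2)"])
    apply auto[4]
    apply (simp only: split_paired_all prod.case)
    apply (rule sgn_start)
    apply (simp only: sgn_norm)
    apply ((rule sgn_eqI, simp add: mult_ac, (simp only: mult_eq_0_iff de_Morgan_disj)?, (elim conjE)?,
       ((drule m_hom | drule mu_hom | drule eps_hom | drule u_hom)+)?, (simp only: even_add even_mult_iff ev01)?, argo?)?)
    done
  also have "\<dots> = eps s * eps l * sgn (a * deg t + b * deg k) * (\<Sum>g\<in>UNIV. m g a1 a2 * mu g t k)"
    by (simp only: bialg sum_distrib_left)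
  also have "\<dots> = (\<Sum>g\<in>UNIV. m g a1 a2 * Lv g ((s,t),(k,l)))"
    unfolding Lv_def eta_L_def by (simp add: kron_simps sum_distrib_left mult_ac)
  finally show "sc_mult TT (Lv a1) (Lv a2) ((s,t),(k,l)) = (\<Sum>g\<in>UNIV. m g a1 a2 * Lv g ((s,t),(k,l)))" .
qed

lemma L2: "sc_mult TT (Rv b1) (Rv b2) = (\<lambda>z. \<Sum>g\<in>UNIV. sgn (deg b1 * deg b2) * mu g b1 b2 * Rv g z)"
proof (intro ext, clarify)
  fix s t k l
  have "sc_mult TT (Rv b1) (Rv b2) ((s,t),(k,l)) = (\<Sum>be\<in>UNIV. \<Sum>ga\<in>UNIV. \<Sum>be'\<in>UNIV. \<Sum>ga'\<in>UNIV.
     sgn (a' * deg be + b' * deg ga) * m b1 ga be * (sgn (a' * deg be' + b' * deg ga') * m b2 ga' be' *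
       (sgn (deg ga * deg be') * (sgn (deg be * deg be') * mu s be be' * u t * (sgn (deg ga * deg ga') * mu l ga ga' * u k)))))"
    unfolding R_exp[of b1] R_exp[of b2] prod_exp[OF hom_W hom_Z] ZZ WW
    by (simp add: ptens_def sum_distrib_left mult_ac)
  also have "\<dots> = (\<Sum>r1\<in>UNIV. \<Sum>s1\<in>UNIV. \<Sum>r2\<in>UNIV. \<Sum>s2\<in>UNIV.
     u t * u k * sgn (deg b1 * deg b2 + a' * deg s + b' * deg l) * (sgn (deg s1 * deg r2) * mu l r1 s1 * mu s r2 s2 * m b1 r1 r2 * m b2 s1 s2))"
    apply (simp only: sum_distrib_left sum_distrib_right)?
    apply (simp only: sum.cartesian_product)
    apply (rule sum.reindex_bij_witness[of _ "\<lambda>(r1,s1,r2,s2). (r2,r1,s2,s1)" "\<lambda>(r2,r1,s2,s1). (r1,s1,r2,s2)"])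
    apply auto[4]
    apply (simp only: split_paired_all prod.case)
    apply (rule sgn_start)
    apply (simp only: sgn_norm)
    apply ((rule sgn_eqI, simp add: mult_ac, (simp only: mult_eq_0_iff de_Morgan_disj)?, (elim conjE)?,
       ((drule m_hom | drule mu_hom | drule eps_hom | drule u_hom)+)?, (simp only: even_add even_mult_iff ev01)?, argo?)?)
    done
  also have "\<dots> = u t * u k * sgn (deg b1 * deg b2 + a' * deg s + b' * deg l) * (\<Sum>g\<in>UNIV. m g l s * mu g b1 b2)"
    by (simp only: bialg sum_distrib_left)
  also have "\<dots> = (\<Sum>g\<in>UNIV. sgn (deg b1 * deg b2) * mu g b1 b2 * Rv g ((s,t),(k,l)))"
    unfolding Rv_def eta_R_def by (simp add: kron_simps sum_distrib_left sgn_add mult_ac)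
  finally show "sc_mult TT (Rv b1) (Rv b2) ((s,t),(k,l)) = (\<Sum>g\<in>UNIV. sgn (deg b1 * deg b2) * mu g b1 b2 * Rv g ((s,t),(k,l)))" .
qed

end

context GH begin

lemma S_one: "(\<Sum>b\<in>UNIV. u b * S b d) = u d"
proof -
  have "(\<Sum>a\<in>UNIV. u a * (\<Sum>b\<in>UNIV. \<Sum>c\<in>UNIV. \<Sum>k\<in>UNIV. mu a b c * S b k * m d k c)) = (\<Sum>a\<in>UNIV. u a * (eps a * u d))"
    by (simp only: antip_l)
  also have "\<dots> = (\<Sum>a\<in>UNIV. u a * eps a) * u d" by (simp add: sum_distrib_right mult.assoc)
  also have "\<dots> = u d" by (simp only: u_eps) simp
  finally have 1: "(\<Sum>a\<in>UNIV. u a * (\<Sum>b\<in>UNIV. \<Sum>c\<in>UNIV. \<Sum>k\<in>UNIV. mu a b c * S b k * m d k c)) = u d" .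
  have "(\<Sum>a\<in>UNIV. u a * (\<Sum>b\<in>UNIV. \<Sum>c\<in>UNIV. \<Sum>k\<in>UNIV. mu a b c * S b k * m d k c)) =
     (\<Sum>b\<in>UNIV. \<Sum>c\<in>UNIV. \<Sum>k\<in>UNIV. S b k * m d k c * (\<Sum>a\<in>UNIV. u a * mu a b c))"
    apply (simp only: sum_distrib_left sum_distrib_right)
    apply (simp only: sum.cartesian_product)
    apply (rule sum.reindex_bij_witness[of _ "\<lambda>(b,c,k,a). (a,b,c,k)" "\<lambda>(a,b,c,k). (b,c,k,a)"])
    apply auto[4]
    apply (simp only: split_paired_all prod.case)
    apply (simp add: mult_ac)
    done
  also have "\<dots> = (\<Sum>k\<in>UNIV. (\<Sum>b\<in>UNIV. u b * S b k) * (\<Sum>c\<in>UNIV. u c * m d k c))"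
    apply (simp only: u_mu)
    apply (simp only: sum_distrib_left sum_distrib_right)
    apply (simp only: sum.cartesian_product)
    apply (rule sum.reindex_bij_witness[of _ "\<lambda>(k,c,b). (b,c,k)" "\<lambda>(b,c,k). (k,c,b)"])
    apply auto[4]
    apply (simp only: split_paired_all prod.case)
    apply (simp add: mult_ac)
    done
  also have "\<dots> = (\<Sum>b\<in>UNIV. u b * S b d)"
    by (simp add: unit_r kron_simps)
  finally show ?thesis using 1 by simp
qed

lemma Sinv_hom: "Sinv x y \<noteq> 0 \<Longrightarrow> even (deg x + deg y)"
proof -
  define X where "X k b = sgn (deg k) * Sinv k b - Sinv k b * sgn (deg b)" for k b
  have A: "(\<Sum>k\<in>UNIV. S c k * X k b) = 0" for c b
  proof -
    have "(\<Sum>k\<in>UNIV. S c k * (sgn (deg k) * Sinv k b)) = (\<Sum>k\<in>UNIV. sgn (deg c) * (S c k * Sinv k b))"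
      apply (rule sum.cong[OF refl])
      subgoal for k by (cases "S c k = 0") (auto simp: sgn_if dest!: S_hom)
      done
    also have "\<dots> = sgn (deg c) * kron c b" by (simp add: sum_distrib_left[symmetric] S_Sinv)
    finally have 1: "(\<Sum>k\<in>UNIV. S c k * (sgn (deg k) * Sinv k b)) = sgn (deg c) * kron c b" .
    have 2: "(\<Sum>k\<in>UNIV. S c k * (Sinv k b * sgn (deg b))) = kron c b * sgn (deg b)"
      by (simp add: sum_distrib_right[symmetric] S_Sinv mult.assoc[symmetric])
    show ?thesis unfolding X_def using 1 2 by (simp add: right_diff_distrib sum_subtractf kron_def)
  qed
  have "X x y = (\<Sum>c\<in>UNIV. Sinv x c * (\<Sum>k\<in>UNIV. S c k * X k y))"
  proof -
    have "(\<Sum>c\<in>UNIV. Sinv x c * (\<Sum>k\<in>UNIV. S c k * X k y)) = (\<Sum>k\<in>UNIV. (\<Sum>c\<in>UNIV. Sinv x c * S c k) * X k y)"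
    apply (simp only: sum_distrib_left sum_distrib_right)
    apply (simp only: sum.cartesian_product)
    apply (rule sum.reindex_bij_witness[of _ "\<lambda>(k,c). (c,k)" "\<lambda>(c,k). (k,c)"])
    apply auto[4]
    apply (simp only: split_paired_all prod.case)
    apply (simp add: mult_ac)
    done
    also have "\<dots> = X x y" by (simp add: Sinv_S kron_simps)
    finally show ?thesis by simp
  qed
  then have "X x y = 0" by (simp add: A)
  then have "sgn (deg x) * Sinv x y = Sinv x y * sgn (deg y)" unfolding X_def by simp
  moreover assume "Sinv x y \<noteq> 0"
  ultimately have "sgn (deg x) = sgn (deg y)" by simp
  then show ?thesis by (auto simp: sgn_if even_add split: if_splits)
qed

end

context GH begin

definition conv :: "('i \<Rightarrow> 'i \<Rightarrow> 'i \<Rightarrow> complex) \<Rightarrow> ('i \<Rightarrow> 'i \<Rightarrow> 'i \<Rightarrow> complex) \<Rightarrow> 'i \<Rightarrow> 'i \<Rightarrow> 'i \<Rightarrow> complex" where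
  "conv H1 H2 x y j = (\<Sum>x1\<in>UNIV. \<Sum>x2\<in>UNIV. \<Sum>y1\<in>UNIV. \<Sum>y2\<in>UNIV. \<Sum>p\<in>UNIV. \<Sum>q\<in>UNIV.
     sgn (deg x2 * deg y1) * mu x x1 x2 * mu y y1 y2 * H1 x1 y1 p * H2 x2 y2 q * m j p q)"

definition UU where "UU x y j = eps x * eps y * u j"

lemma conv_assoc: "conv (conv H1 H2) H3 = conv H1 (conv H2 H3)"
proof (intro ext)
  fix x y j
  have h1: "H1 x1 y1 z1 * (sgn w * c) = sgn w * (H1 x1 y1 z1 * c)" "H1 x1 y1 z1 * sgn w = sgn w * H1 x1 y1 z1"
   and h2: "H2 x1 y1 z1 * (sgn w * c) = sgn w * (H2 x1 y1 z1 * c)" "H2 x1 y1 z1 * sgn w = sgn w * H2 x1 y1 z1"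
   and h3: "H3 x1 y1 z1 * (sgn w * c) = sgn w * (H3 x1 y1 z1 * c)" "H3 x1 y1 z1 * sgn w = sgn w * H3 x1 y1 z1"
   for x1 y1 z1 w c by (simp_all add: mult_ac)
  note h4 = h1(2) and h5 = h2(2) and h6 = h3(2)
  have "conv (conv H1 H2) H3 x y j = (\<Sum>x11\<in>UNIV. \<Sum>x12\<in>UNIV. \<Sum>x2\<in>UNIV. \<Sum>y11\<in>UNIV. \<Sum>y12\<in>UNIV. \<Sum>y2\<in>UNIV.
      \<Sum>p1\<in>UNIV. \<Sum>q1\<in>UNIV. \<Sum>q\<in>UNIV.
      sgn (deg x2 * (deg y11 + deg y12) + deg x12 * deg y11) * H1 x11 y11 p1 * H2 x12 y12 q1 * H3 x2 y2 q *
      (\<Sum>x1\<in>UNIV. mu x x1 x2 * mu x1 x11 x12) * (\<Sum>y1\<in>UNIV. mu y y1 y2 * mu y1 y11 y12) * (\<Sum>p\<in>UNIV. m p p1 q1 * m j p q))"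
    unfolding conv_def
    apply (simp only: sum_distrib_left sum_distrib_right)?
    apply (simp only: sum.cartesian_product)
    apply (rule sum.reindex_bij_witness[of _ "\<lambda>(x11,x12,x2,y11,y12,y2,p1,q1,q,p,y1,x1). (x1,x2,y1,y2,p,q,x11,x12,y11,y12,p1,q1)" "\<lambda>(x1,x2,y1,y2,p,q,x11,x12,y11,y12,p1,q1). (x11,x12,x2,y11,y12,y2,p1,q1,q,p,y1,x1)"])
    apply auto[4]
    apply (simp only: split_paired_all prod.case)
    apply (rule sgn_start)
    apply (simp only: sgn_norm h1 h2 h3 h4 h5 h6)
    apply ((rule sgn_eqI, simp add: mult_ac, (simp only: mult_eq_0_iff de_Morgan_disj)?, (elim conjE)?,
       ((drule m_hom | drule mu_hom | drule eps_hom | drule u_hom | drule S_hom)+)?, (simp only: even_add even_mult_iff ev01)?, argo?)?)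
    done
  also have "\<dots> = (\<Sum>x11\<in>UNIV. \<Sum>x12\<in>UNIV. \<Sum>x2\<in>UNIV. \<Sum>y11\<in>UNIV. \<Sum>y12\<in>UNIV. \<Sum>y2\<in>UNIV.
      \<Sum>p1\<in>UNIV. \<Sum>q1\<in>UNIV. \<Sum>q\<in>UNIV.
      sgn (deg x2 * (deg y11 + deg y12) + deg x12 * deg y11) * H1 x11 y11 p1 * H2 x12 y12 q1 * H3 x2 y2 q *
      (\<Sum>k\<in>UNIV. mu x x11 k * mu k x12 x2) * (\<Sum>k\<in>UNIV. mu y y11 k * mu k y12 y2) * (\<Sum>k\<in>UNIV. m k q1 q * m j p1 k))"
    by (simp only: coassoc m_assoc)
  also have "\<dots> = (\<Sum>a1\<in>UNIV. \<Sum>b1\<in>UNIV. \<Sum>c1\<in>UNIV. \<Sum>d1\<in>UNIV. \<Sum>e1\<in>UNIV. \<Sum>f1\<in>UNIV.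
      \<Sum>p1\<in>UNIV. \<Sum>p2\<in>UNIV. \<Sum>p3\<in>UNIV. \<Sum>k1\<in>UNIV. \<Sum>k2\<in>UNIV. \<Sum>k3\<in>UNIV.
      sgn (deg c1 * deg d1 + deg c1 * deg e1 + deg b1 * deg d1) * mu x a1 k1 * mu k1 b1 c1 * mu y d1 k2 * mu k2 e1 f1 *
      H1 a1 d1 p1 * H2 b1 e1 p2 * H3 c1 f1 p3 * m k3 p2 p3 * m j p1 k3)"
    apply (simp only: sum_distrib_left sum_distrib_right)?
    apply (simp only: sum.cartesian_product)
    apply (rule sum.reindex_bij_witness[of _ "\<lambda>(a1,b1,c1,d1,e1,f1,p1,p2,p3,k1,k2,k3). (a1,b1,c1,d1,e1,f1,p1,p2,p3,k3,k2,k1)" "\<lambda>(a1,b1,c1,d1,e1,f1,p1,p2,p3,k3,k2,k1). (a1,b1,c1,d1,e1,f1,p1,p2,p3,k1,k2,k3)"])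
    apply auto[4]
    apply (simp only: split_paired_all prod.case)
    apply (rule sgn_start)
    apply (simp only: sgn_norm h1 h2 h3 h4 h5 h6)
    apply ((rule sgn_eqI, simp add: mult_ac, (simp only: mult_eq_0_iff de_Morgan_disj)?, (elim conjE)?,
       ((drule m_hom | drule mu_hom | drule eps_hom | drule u_hom | drule S_hom)+)?, (simp only: even_add even_mult_iff ev01)?, argo?)?)
    done
  also have "\<dots> = conv H1 (conv H2 H3) x y j"
    unfolding conv_def
    apply (simp only: sum_distrib_left sum_distrib_right)?
    apply (simp only: sum.cartesian_product)
    apply (rule sum.reindex_bij_witness[of _ "\<lambda>(a1,k1,d1,k2,p1,k3,b1,c1,e1,f1,p2,p3). (a1,b1,c1,d1,e1,f1,p1,p2,p3,k1,k2,k3)" "\<lambda>(a1,b1,c1,d1,e1,f1,p1,p2,p3,k1,k2,k3). (a1,k1,d1,k2,p1,k3,b1,c1,e1,f1,p2,p3)"])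
    apply auto[4]
    apply (simp only: split_paired_all prod.case)
    apply (rule sgn_start)
    apply (simp only: sgn_norm h1 h2 h3 h4 h5 h6)
    apply ((rule sgn_eqI, simp add: mult_ac, (simp only: mult_eq_0_iff de_Morgan_disj)?, (elim conjE)?,
       ((drule m_hom | drule mu_hom | drule eps_hom | drule u_hom | drule S_hom)+)?, (simp only: even_add even_mult_iff ev01)?, argo?)?)
    done
  finally show "conv (conv H1 H2) H3 x y j = conv H1 (conv H2 H3) x y j" .
qed


lemma conv_U_r: "conv H UU = H"
proof (intro ext)
  fix x y j
  have h1: "H x1 y1 z1 * (sgn w * c) = sgn w * (H x1 y1 z1 * c)" and h2: "H x1 y1 z1 * sgn w = sgn w * H x1 y1 z1"
   for x1 y1 z1 w c by (simp_all add: mult_ac)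
  have "conv H UU x y j = (\<Sum>x1\<in>UNIV. \<Sum>y1\<in>UNIV. \<Sum>p\<in>UNIV. H x1 y1 p * (\<Sum>x2\<in>UNIV. eps x2 * mu x x1 x2) *
     (\<Sum>y2\<in>UNIV. eps y2 * mu y y1 y2) * (\<Sum>q\<in>UNIV. u q * m j p q))"
    unfolding conv_def UU_def
    apply (simp only: sum_distrib_left sum_distrib_right)?
    apply (simp only: sum.cartesian_product)
    apply (rule sum.reindex_bij_witness[of _ "\<lambda>(x1,y1,p,q,y2,x2). (x1,x2,y1,y2,p,q)" "\<lambda>(x1,x2,y1,y2,p,q). (x1,y1,p,q,y2,x2)"])
    apply auto[4]
    apply (simp only: split_paired_all prod.case)
    apply (rule sgn_start)
    apply (simp only: sgn_norm h1 h2)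
    apply ((rule sgn_eqI, simp add: mult_ac, (simp only: mult_eq_0_iff de_Morgan_disj)?, (elim conjE)?,
       ((drule m_hom | drule mu_hom | drule eps_hom | drule u_hom | drule S_hom)+)?, (simp only: even_add even_mult_iff ev01)?, argo?)?)
    done
  also have "\<dots> = H x y j" by (simp only: counit_r unit_r) (simp add: kron_simps)
  finally show "conv H UU x y j = H x y j" .
qed

lemma conv_U_l: "conv UU H = H"
proof (intro ext)
  fix x y j
  have h1: "H x1 y1 z1 * (sgn w * c) = sgn w * (H x1 y1 z1 * c)" and h2: "H x1 y1 z1 * sgn w = sgn w * H x1 y1 z1"
   for x1 y1 z1 w c by (simp_all add: mult_ac)
  have "conv UU H x y j = (\<Sum>x2\<in>UNIV. \<Sum>y2\<in>UNIV. \<Sum>q\<in>UNIV. H x2 y2 q * (\<Sum>x1\<in>UNIV. eps x1 * mu x x1 x2) *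
     (\<Sum>y1\<in>UNIV. eps y1 * mu y y1 y2) * (\<Sum>p\<in>UNIV. u p * m j p q))"
    unfolding conv_def UU_def
    apply (simp only: sum_distrib_left sum_distrib_right)?
    apply (simp only: sum.cartesian_product)
    apply (rule sum.reindex_bij_witness[of _ "\<lambda>(x2,y2,q,p,y1,x1). (x1,x2,y1,y2,p,q)" "\<lambda>(x1,x2,y1,y2,p,q). (x2,y2,q,p,y1,x1)"])
    apply auto[4]
    apply (simp only: split_paired_all prod.case)
    apply (rule sgn_start)
    apply (simp only: sgn_norm h1 h2)
    apply ((rule sgn_eqI, simp add: mult_ac, (simp only: mult_eq_0_iff de_Morgan_disj)?, (elim conjE)?,
       ((drule m_hom | drule mu_hom | drule eps_hom | drule u_hom | drule S_hom)+)?, (simp only: even_add even_mult_iff ev01)?, argo?)?)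
    done
  also have "\<dots> = H x y j" by (simp only: counit_l unit_l) (simp add: kron_simps)
  finally show "conv UU H x y j = H x y j" .
qed

definition FF where "FF x y j = (\<Sum>k\<in>UNIV. m k x y * S k j)"
definition MM where "MM x y j = m j x y"
definition GG where "GG x y j = sgn (deg x * deg y) * (\<Sum>p\<in>UNIV. \<Sum>q\<in>UNIV. S y p * S x q * m j p q)"

lemma conv_FM: "conv FF MM = UU"
proof (intro ext)
  fix x y j
  have "conv FF MM x y j = (\<Sum>k\<in>UNIV. \<Sum>q\<in>UNIV. \<Sum>p\<in>UNIV. S k p * m j p q *
     (\<Sum>x1\<in>UNIV. \<Sum>x2\<in>UNIV. \<Sum>y1\<in>UNIV. \<Sum>y2\<in>UNIV. sgn (deg x2 * deg y1) * mu x x1 x2 * mu y y1 y2 * m k x1 y1 * m q x2 y2))"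
    unfolding conv_def FF_def MM_def
    apply (simp only: sum_distrib_left sum_distrib_right)?
    apply (simp only: sum.cartesian_product)
    apply (rule sum.reindex_bij_witness[of _ "\<lambda>(k,q,p,x1,x2,y1,y2). (x1,x2,y1,y2,p,q,k)" "\<lambda>(x1,x2,y1,y2,p,q,k). (k,q,p,x1,x2,y1,y2)"])
    apply auto[4]
    apply (simp only: split_paired_all prod.case)
    apply (rule sgn_start)
    apply (simp only: sgn_norm)
    apply ((rule sgn_eqI, simp add: mult_ac, (simp only: mult_eq_0_iff de_Morgan_disj)?, (elim conjE)?,
       ((drule m_hom | drule mu_hom | drule eps_hom | drule u_hom | drule S_hom)+)?, (simp only: even_add even_mult_iff ev01)?, argo?)?)
    done
  also have "\<dots> = (\<Sum>k\<in>UNIV. \<Sum>q\<in>UNIV. \<Sum>p\<in>UNIV. S k p * m j p q * (\<Sum>g\<in>UNIV. m g x y * mu g k q))"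
    by (simp only: bialg)
  also have "\<dots> = (\<Sum>g\<in>UNIV. m g x y * (\<Sum>k\<in>UNIV. \<Sum>q\<in>UNIV. \<Sum>p\<in>UNIV. mu g k q * S k p * m j p q))"
    apply (simp only: sum_distrib_left sum_distrib_right)?
    apply (simp only: sum.cartesian_product)
    apply (rule sum.reindex_bij_witness[of _ "\<lambda>(g,k,q,p). (k,q,p,g)" "\<lambda>(k,q,p,g). (g,k,q,p)"])
    apply auto[4]
    apply (simp only: split_paired_all prod.case)
    apply (rule sgn_start)
    apply (simp only: sgn_norm)
    apply ((rule sgn_eqI, simp add: mult_ac, (simp only: mult_eq_0_iff de_Morgan_disj)?, (elim conjE)?,
       ((drule m_hom | drule mu_hom | drule eps_hom | drule u_hom | drule S_hom)+)?, (simp only: even_add even_mult_iff ev01)?, argo?)?)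
    done
  also have "\<dots> = (\<Sum>g\<in>UNIV. m g x y * eps g) * u j"
    by (simp only: antip_l) (simp add: sum_distrib_right mult.assoc)
  also have "\<dots> = UU x y j" by (simp only: m_eps UU_def)
  finally show "conv FF MM x y j = UU x y j" .
qed

lemma conv_MG: "conv MM GG = UU"
proof (intro ext)
  fix x y j
  have "conv MM GG x y j = (\<Sum>x1\<in>UNIV. \<Sum>x2\<in>UNIV. \<Sum>y1\<in>UNIV. \<Sum>y2\<in>UNIV. \<Sum>pp\<in>UNIV. \<Sum>qq\<in>UNIV. \<Sum>q\<in>UNIV.
      sgn (deg x2 * deg y1 + deg x2 * deg y2) * mu x x1 x2 * mu y y1 y2 * S y2 pp * S x2 qq * m q pp qq * (\<Sum>p\<in>UNIV. m p x1 y1 * m j p q))"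
    unfolding conv_def MM_def GG_def
    apply (simp only: sum_distrib_left sum_distrib_right)?
    apply (simp only: sum.cartesian_product)
    apply (rule sum.reindex_bij_witness[of _ "\<lambda>(x1,x2,y1,y2,pp,qq,q,p). (x1,x2,y1,y2,p,q,pp,qq)" "\<lambda>(x1,x2,y1,y2,p,q,pp,qq). (x1,x2,y1,y2,pp,qq,q,p)"])
    apply auto[4]
    apply (simp only: split_paired_all prod.case)
    apply (rule sgn_start)
    apply (simp only: sgn_norm)
    apply ((rule sgn_eqI, simp add: mult_ac, (simp only: mult_eq_0_iff de_Morgan_disj)?, (elim conjE)?,
       ((drule m_hom | drule mu_hom | drule eps_hom | drule u_hom | drule S_hom)+)?, (simp only: even_add even_mult_iff ev01)?, argo?)?)
    done
  also have "\<dots> = (\<Sum>x1\<in>UNIV. \<Sum>x2\<in>UNIV. \<Sum>y1\<in>UNIV. \<Sum>y2\<in>UNIV. \<Sum>pp\<in>UNIV. \<Sum>qq\<in>UNIV. \<Sum>q\<in>UNIV.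
      sgn (deg x2 * deg y1 + deg x2 * deg y2) * mu x x1 x2 * mu y y1 y2 * S y2 pp * S x2 qq * m q pp qq * (\<Sum>k\<in>UNIV. m k y1 q * m j x1 k))"
    by (simp only: m_assoc)
  also have "\<dots> = (\<Sum>x1\<in>UNIV. \<Sum>x2\<in>UNIV. \<Sum>y1\<in>UNIV. \<Sum>y2\<in>UNIV. \<Sum>pp\<in>UNIV. \<Sum>qq\<in>UNIV. \<Sum>k\<in>UNIV.
      sgn (deg x2 * deg y1 + deg x2 * deg y2) * mu x x1 x2 * mu y y1 y2 * S y2 pp * S x2 qq * m j x1 k * (\<Sum>q\<in>UNIV. m q pp qq * m k y1 q))"
    apply (simp only: sum_distrib_left sum_distrib_right)?
    apply (simp only: sum.cartesian_product)
    apply (rule sum.reindex_bij_witness[of _ "\<lambda>(x1,x2,y1,y2,pp,qq,k,q). (x1,x2,y1,y2,pp,qq,q,k)" "\<lambda>(x1,x2,y1,y2,pp,qq,q,k). (x1,x2,y1,y2,pp,qq,k,q)"])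
    apply auto[4]
    apply (simp only: split_paired_all prod.case)
    apply (rule sgn_start)
    apply (simp only: sgn_norm)
    apply ((rule sgn_eqI, simp add: mult_ac, (simp only: mult_eq_0_iff de_Morgan_disj)?, (elim conjE)?,
       ((drule m_hom | drule mu_hom | drule eps_hom | drule u_hom | drule S_hom)+)?, (simp only: even_add even_mult_iff ev01)?, argo?)?)
    done
  also have "\<dots> = (\<Sum>x1\<in>UNIV. \<Sum>x2\<in>UNIV. \<Sum>y1\<in>UNIV. \<Sum>y2\<in>UNIV. \<Sum>pp\<in>UNIV. \<Sum>qq\<in>UNIV. \<Sum>k\<in>UNIV.
      sgn (deg x2 * deg y1 + deg x2 * deg y2) * mu x x1 x2 * mu y y1 y2 * S y2 pp * S x2 qq * m j x1 k * (\<Sum>r\<in>UNIV. m r y1 pp * m k r qq))"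
    by (simp only: m_assoc[symmetric])
  also have "\<dots> = (\<Sum>x1\<in>UNIV. \<Sum>x2\<in>UNIV. \<Sum>qq\<in>UNIV. \<Sum>k\<in>UNIV. \<Sum>r\<in>UNIV.
      sgn (deg x2 * deg y) * mu x x1 x2 * S x2 qq * m j x1 k * m k r qq * (\<Sum>y1\<in>UNIV. \<Sum>y2\<in>UNIV. \<Sum>pp\<in>UNIV. mu y y1 y2 * S y2 pp * m r y1 pp))"
    apply (simp only: sum_distrib_left sum_distrib_right)?
    apply (simp only: sum.cartesian_product)
    apply (rule sum.reindex_bij_witness[of _ "\<lambda>(x1,x2,qq,k,r,y1,y2,pp). (x1,x2,y1,y2,pp,qq,k,r)" "\<lambda>(x1,x2,y1,y2,pp,qq,k,r). (x1,x2,qq,k,r,y1,y2,pp)"])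
    apply auto[4]
    apply (simp only: split_paired_all prod.case)
    apply (rule sgn_start)
    apply (simp only: sgn_norm)
    apply ((rule sgn_eqI, simp add: mult_ac, (simp only: mult_eq_0_iff de_Morgan_disj)?, (elim conjE)?,
       ((drule m_hom | drule mu_hom | drule eps_hom | drule u_hom | drule S_hom)+)?, (simp only: even_add even_mult_iff ev01)?, argo?)?)
    done
  also have "\<dots> = (\<Sum>x1\<in>UNIV. \<Sum>x2\<in>UNIV. \<Sum>qq\<in>UNIV. \<Sum>k\<in>UNIV. \<Sum>r\<in>UNIV.
      sgn (deg x2 * deg y) * mu x x1 x2 * S x2 qq * m j x1 k * m k r qq * (eps y * u r))"
    by (simp only: antip_r)
  also have "\<dots> = (\<Sum>x1\<in>UNIV. \<Sum>x2\<in>UNIV. \<Sum>qq\<in>UNIV. \<Sum>k\<in>UNIV.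
      sgn (deg x2 * deg y) * mu x x1 x2 * S x2 qq * m j x1 k * eps y * (\<Sum>r\<in>UNIV. u r * m k r qq))"
    by (simp add: sum_distrib_left mult_ac)
  also have "\<dots> = (\<Sum>x1\<in>UNIV. \<Sum>x2\<in>UNIV. \<Sum>qq\<in>UNIV. \<Sum>k\<in>UNIV.
      sgn (deg x2 * deg y) * mu x x1 x2 * S x2 qq * m j x1 k * eps y * kron k qq)"
    by (simp only: unit_l)
  also have "\<dots> = (\<Sum>x1\<in>UNIV. \<Sum>x2\<in>UNIV. \<Sum>qq\<in>UNIV.
      sgn (deg x2 * deg y) * mu x x1 x2 * S x2 qq * m j x1 qq * eps y)"
    by (simp add: kron_simps)
  also have "\<dots> = eps y * (\<Sum>x1\<in>UNIV. \<Sum>x2\<in>UNIV. \<Sum>qq\<in>UNIV. mu x x1 x2 * S x2 qq * m j x1 qq)"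
    apply (simp only: sum_distrib_left sum_distrib_right)?
    apply (simp only: sum.cartesian_product)
    apply (rule sum.reindex_bij_witness[of _ "\<lambda>(x1,x2,qq). (x1,x2,qq)" "\<lambda>(x1,x2,qq). (x1,x2,qq)"])
    apply auto[4]
    apply (simp only: split_paired_all prod.case)
    apply (rule sgn_start)
    apply (simp only: sgn_norm)
    apply ((rule sgn_eqI, simp add: mult_ac, (simp only: mult_eq_0_iff de_Morgan_disj)?, (elim conjE)?,
       ((drule m_hom | drule mu_hom | drule eps_hom | drule u_hom | drule S_hom)+)?, (simp only: even_add even_mult_iff ev01)?, argo?)?)
    done
  also have "\<dots> = UU x y j" by (simp only: antip_r UU_def) (simp add: mult_ac)
  finally show "conv MM GG x y j = UU x y j" .
qed

lemma FF_GG: "FF = GG"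
proof -
  have "FF = conv FF UU" by (simp add: conv_U_r)
  also have "\<dots> = conv FF (conv MM GG)" by (simp add: conv_MG)
  also have "\<dots> = conv (conv FF MM) GG" by (simp add: conv_assoc)
  also have "\<dots> = GG" by (simp add: conv_FM conv_U_l)
  finally show ?thesis .
qed

lemma S_antimult: "(\<Sum>k\<in>UNIV. m k x y * S k j) = sgn (deg x * deg y) * (\<Sum>p\<in>UNIV. \<Sum>q\<in>UNIV. S y p * S x q * m j p q)"
  using fun_cong[OF fun_cong[OF fun_cong[OF FF_GG, of x], of y], of j] unfolding FF_def GG_def .

lemma S_cancel_aux: "(\<Sum>j\<in>UNIV. (\<Sum>k\<in>UNIV. A k * S k j) * Sinv j l) = A l"
proof -
  have "(\<Sum>j\<in>UNIV. (\<Sum>k\<in>UNIV. A k * S k j) * Sinv j l) = (\<Sum>k\<in>UNIV. A k * (\<Sum>j\<in>UNIV. S k j * Sinv j l))"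
    apply (simp only: sum_distrib_left sum_distrib_right)
    apply (simp only: sum.cartesian_product)
    apply (rule sum.reindex_bij_witness[of _ "\<lambda>(k,j). (j,k)" "\<lambda>(j,k). (k,j)"])
    apply auto[4]
    apply (simp only: split_paired_all prod.case)
    apply (simp add: mult_ac)
    done
  also have "\<dots> = A l" by (simp add: S_Sinv kron_simps)
  finally show ?thesis .
qed

lemma S_cancel: "(\<And>j. (\<Sum>k\<in>UNIV. A k * S k j) = (\<Sum>k\<in>UNIV. B k * S k j)) \<Longrightarrow> A l = B l"
  using S_cancel_aux[of A l] S_cancel_aux[of B l] by simp

lemma Sinv_lem: "(\<Sum>e\<in>UNIV. \<Sum>f\<in>UNIV. \<Sum>d\<in>UNIV. sgn (deg e * deg f) * mu g e f * Sinv e d * m k f d) = eps g * u k"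
proof (rule S_cancel[where A="\<lambda>k. \<Sum>e\<in>UNIV. \<Sum>f\<in>UNIV. \<Sum>d\<in>UNIV. sgn (deg e * deg f) * mu g e f * Sinv e d * m k f d" and B="\<lambda>k. eps g * u k"])
  fix j
  have "(\<Sum>k\<in>UNIV. (\<Sum>e\<in>UNIV. \<Sum>f\<in>UNIV. \<Sum>d\<in>UNIV. sgn (deg e * deg f) * mu g e f * Sinv e d * m k f d) * S k j) =
    (\<Sum>e\<in>UNIV. \<Sum>f\<in>UNIV. \<Sum>d\<in>UNIV. sgn (deg e * deg f) * mu g e f * Sinv e d * (\<Sum>k\<in>UNIV. m k f d * S k j))"
    apply (simp only: sum_distrib_left sum_distrib_right)
    apply (simp only: sum.cartesian_product)
    apply (rule sum.reindex_bij_witness[of _ "\<lambda>(e,f,d,k). (k,e,f,d)" "\<lambda>(k,e,f,d). (e,f,d,k)"])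
    apply auto[4]
    apply (simp only: split_paired_all prod.case)
    apply (simp add: mult_ac)
    done
  also have "\<dots> = (\<Sum>e\<in>UNIV. \<Sum>f\<in>UNIV. \<Sum>d\<in>UNIV. sgn (deg e * deg f) * mu g e f * Sinv e d *
     (sgn (deg f * deg d) * (\<Sum>p\<in>UNIV. \<Sum>q\<in>UNIV. S d p * S f q * m j p q)))"
    by (simp only: S_antimult)
  also have "\<dots> = (\<Sum>e\<in>UNIV. \<Sum>f\<in>UNIV. \<Sum>q\<in>UNIV. \<Sum>p\<in>UNIV. mu g e f * S f q * m j p q * (\<Sum>d\<in>UNIV. Sinv e d * S d p))"
    apply (simp only: sum_distrib_left sum_distrib_right)?
    apply (simp only: sum.cartesian_product)
    apply (rule sum.reindex_bij_witness[of _ "\<lambda>(e,f,q,p,d). (e,f,d,p,q)" "\<lambda>(e,f,d,p,q). (e,f,q,p,d)"])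
    apply auto[4]
    apply (simp only: split_paired_all prod.case)
    apply (rule sgn_start)
    apply (simp only: sgn_norm)
    apply ((rule sgn_eqI, simp add: mult_ac, (simp only: mult_eq_0_iff de_Morgan_disj)?, (elim conjE)?,
       ((drule m_hom | drule mu_hom | drule eps_hom | drule u_hom | drule S_hom | drule Sinv_hom)+)?, (simp only: even_add even_mult_iff ev01)?, argo?)?)
    done
  also have "\<dots> = (\<Sum>e\<in>UNIV. \<Sum>f\<in>UNIV. \<Sum>q\<in>UNIV. mu g e f * S f q * m j e q)"
    by (simp add: Sinv_S kron_simps)
  also have "\<dots> = eps g * u j" by (rule antip_r)
  also have "\<dots> = (\<Sum>k\<in>UNIV. eps g * u k * S k j)"
    by (simp add: mult.assoc sum_distrib_left[symmetric] S_one)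
  finally show "(\<Sum>k\<in>UNIV. (\<Sum>e\<in>UNIV. \<Sum>f\<in>UNIV. \<Sum>d\<in>UNIV. sgn (deg e * deg f) * mu g e f * Sinv e d * m k f d) * S k j) =
    (\<Sum>k\<in>UNIV. eps g * u k * S k j)" .
qed
end

context GH2 begin

definition Lfin where "Lfin be ga x y z w = (\<Sum>g\<in>UNIV. \<Sum>g'\<in>UNIV. \<Sum>e\<in>UNIV. sgn (a' * deg x + b' * deg g + a * deg y + b * deg g' + deg g * deg y + deg z * deg w + deg z * deg e) *
     m be g x * mu ga y g' * mu g' z e * m g e w)"

lemma RL_coord: "sc_mult TT (Rv be) (Lv ga) ((x,y),(z,w)) = Lfin be ga x y z w"
proof -
  have "sc_mult TT (Rv be) (Lv ga) ((x,y),(z,w)) = (\<Sum>bb\<in>UNIV. \<Sum>g\<in>UNIV. \<Sum>bq\<in>UNIV. \<Sum>g'\<in>UNIV.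
     sgn (a' * deg bb + b' * deg g) * m be g bb * (sgn (a * deg bq + b * deg g') * mu ga bq g' *
       (sgn (deg g * deg bq) * (bas2 bb bq (x,y) * WYf g g' (z,w)))))"
    unfolding R_exp[of be] L_exp[of ga] prod_exp[OF hom_W hom_X] ZX WY
    by (simp add: ptens_def sum_distrib_left)
  also have "\<dots> = (\<Sum>g\<in>UNIV. \<Sum>g'\<in>UNIV. \<Sum>e\<in>UNIV. sgn (a' * deg x + b' * deg g) * m be g x * (sgn (a * deg y + b * deg g') * mu ga y g' *
       (sgn (deg g * deg y) * (sgn (deg z * deg w + deg z * deg e) * mu g' z e * m g e w))))"
    by (simp add: bas2_def WYf_def kron_simps sum_distrib_left)
  also have "\<dots> = Lfin be ga x y z w"
    unfolding Lfin_def
    apply (simp only: sum_distrib_left sum_distrib_right)?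
    apply (simp only: sum.cartesian_product)
    apply (rule sum.reindex_bij_witness[of _ "\<lambda>(g,g',e). (g,g',e)" "\<lambda>(g,g',e). (g,g',e)"])
    apply auto[4]
    apply (simp only: split_paired_all prod.case)
    apply (rule sgn_start)
    apply (simp only: sgn_norm)
    apply ((rule sgn_eqI, simp add: mult_ac, (simp only: mult_eq_0_iff de_Morgan_disj)?, (elim conjE)?,
       ((drule m_hom | drule mu_hom | drule eps_hom | drule u_hom | drule S_hom | drule Sinv_hom)+)?, insert pa pb, (simp only: even_add even_mult_iff ev01)?, argo?)?)
    done
  finally show ?thesis .
qed


lemma LR_coord: "sc_mult TT (Lv s) (Rv t) ((x,y),(z,w)) = (\<Sum>bb\<in>UNIV. \<Sum>bq\<in>UNIV. sgn (a * deg bb + b * deg z + a' * deg bq + b' * deg w + deg z * deg bq) *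
   mu s bb z * m t w bq * XZf bb bq (x,y))"
proof -
  have "sc_mult TT (Lv s) (Rv t) ((x,y),(z,w)) = (\<Sum>bb\<in>UNIV. \<Sum>g\<in>UNIV. \<Sum>bq\<in>UNIV. \<Sum>g'\<in>UNIV.
     sgn (a * deg bb + b * deg g) * mu s bb g * (sgn (a' * deg bq + b' * deg g') * m t g' bq *
       (sgn (deg g * deg bq) * (XZf bb bq (x,y) * bas2 g g' (z,w)))))"
    unfolding L_exp[of s] R_exp[of t] prod_exp[OF hom_Y hom_Z] XZ YW
    by (simp add: ptens_def sum_distrib_left)
  also have "\<dots> = (\<Sum>bb\<in>UNIV. \<Sum>bq\<in>UNIV. sgn (a * deg bb + b * deg z) * mu s bb z * (sgn (a' * deg bq + b' * deg w) * m t w bq *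
       (sgn (deg z * deg bq) * XZf bb bq (x,y))))"
    by (simp add: bas2_def kron_simps sum_distrib_left)
  also have "\<dots> = (\<Sum>bb\<in>UNIV. \<Sum>bq\<in>UNIV. sgn (a * deg bb + b * deg z + a' * deg bq + b' * deg w + deg z * deg bq) *
   mu s bb z * m t w bq * XZf bb bq (x,y))"
    by (simp add: sgn_add mult_ac)
  finally show ?thesis .
qed

lemma L3_coord: "(\<Sum>s\<in>UNIV. \<Sum>t\<in>UNIV. D_cross deg m mu Sinv be ga s t * sc_mult TT (Lv s) (Rv t) ((x,y),(z,w))) = Lfin be ga x y z w"
proof -
  have "(\<Sum>s\<in>UNIV. \<Sum>t\<in>UNIV. D_cross deg m mu Sinv be ga s t * sc_mult TT (Lv s) (Rv t) ((x,y),(z,w))) = (\<Sum>mm\<in>UNIV. \<Sum>nu\<in>UNIV. \<Sum>de\<in>UNIV. \<Sum>ep\<in>UNIV. \<Sum>rho\<in>UNIV. \<Sum>bb\<in>UNIV. \<Sum>bq\<in>UNIV. \<Sum>t\<in>UNIV. \<Sum>e\<in>UNIV. sgn (deg mm * (deg bb + deg z + deg de) + a * deg bb + b * deg z + a' * deg bq + b' * deg w + deg z * deg bq + deg bb * deg bq + deg x * deg e + deg e) * m mm nu t * m be mm de * mu ga ep rho * Sinv ep de * m t w bq * m bq x e * mu bb e y * (\<Sum>s\<in>UNIV. mu rho s nu * mu s bb z))"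
    unfolding LR_coord D_cross_def XZf_def prod.case
    apply (simp only: sum_distrib_left sum_distrib_right)?
    apply (simp only: sum.cartesian_product)
    apply (rule sum.reindex_bij_witness[of _ "\<lambda>(mm,nu,de,ep,rho,bb,bq,t,e,s). (s,t,bb,bq,e,mm,nu,de,ep,rho)" "\<lambda>(s,t,bb,bq,e,mm,nu,de,ep,rho). (mm,nu,de,ep,rho,bb,bq,t,e,s)"])
    apply auto[4]
    apply (simp only: split_paired_all prod.case)
    apply (rule sgn_start)
    apply (simp only: sgn_norm)
    apply ((rule sgn_eqI, simp add: mult_ac, (simp only: mult_eq_0_iff de_Morgan_disj)?, (elim conjE)?,
       ((drule m_hom | drule mu_hom | drule eps_hom | drule u_hom | drule S_hom | drule Sinv_hom)+)?, insert pa pb, (simp only: even_add even_mult_iff ev01)?, argo?)?)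
    done
  also have "\<dots> = (\<Sum>mm\<in>UNIV. \<Sum>nu\<in>UNIV. \<Sum>de\<in>UNIV. \<Sum>ep\<in>UNIV. \<Sum>rho\<in>UNIV. \<Sum>bb\<in>UNIV. \<Sum>bq\<in>UNIV. \<Sum>t\<in>UNIV. \<Sum>e\<in>UNIV. sgn (deg mm * (deg bb + deg z + deg de) + a * deg bb + b * deg z + a' * deg bq + b' * deg w + deg z * deg bq + deg bb * deg bq + deg x * deg e + deg e) * m mm nu t * m be mm de * mu ga ep rho * Sinv ep de * m t w bq * m bq x e * mu bb e y * (\<Sum>c1\<in>UNIV. mu rho bb c1 * mu c1 z nu))" by (simp only: coassoc)
  also have "\<dots> = (\<Sum>mm\<in>UNIV. \<Sum>nu\<in>UNIV. \<Sum>de\<in>UNIV. \<Sum>ep\<in>UNIV. \<Sum>rho\<in>UNIV. \<Sum>bq\<in>UNIV. \<Sum>t\<in>UNIV. \<Sum>e\<in>UNIV. \<Sum>c1\<in>UNIV. sgn (deg mm * (deg e + deg y + deg z + deg de) + a * (deg e + deg y) + b * deg z + a' * deg bq + b' * deg w + deg z * deg bq + (deg e + deg y) * deg bq + deg x * deg e + deg e) * m mm nu t * m be mm de * mu ga ep rho * Sinv ep de * m t w bq * m bq x e * mu c1 z nu * (\<Sum>bb\<in>UNIV. mu rho bb c1 * mu bb e y))"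
    apply (simp only: sum_distrib_left sum_distrib_right)?
    apply (simp only: sum.cartesian_product)
    apply (rule sum.reindex_bij_witness[of _ "\<lambda>(mm,nu,de,ep,rho,bq,t,e,c1,bb). (mm,nu,de,ep,rho,bb,bq,t,e,c1)" "\<lambda>(mm,nu,de,ep,rho,bb,bq,t,e,c1). (mm,nu,de,ep,rho,bq,t,e,c1,bb)"])
    apply auto[4]
    apply (simp only: split_paired_all prod.case)
    apply (rule sgn_start)
    apply (simp only: sgn_norm)
    apply ((rule sgn_eqI, simp add: mult_ac, (simp only: mult_eq_0_iff de_Morgan_disj)?, (elim conjE)?,
       ((drule m_hom | drule mu_hom | drule eps_hom | drule u_hom | drule S_hom | drule Sinv_hom)+)?, insert pa pb, (simp only: even_add even_mult_iff ev01)?, argo?)?)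
    done
  also have "\<dots> = (\<Sum>mm\<in>UNIV. \<Sum>nu\<in>UNIV. \<Sum>de\<in>UNIV. \<Sum>ep\<in>UNIV. \<Sum>rho\<in>UNIV. \<Sum>bq\<in>UNIV. \<Sum>t\<in>UNIV. \<Sum>e\<in>UNIV. \<Sum>c1\<in>UNIV. sgn (deg mm * (deg e + deg y + deg z + deg de) + a * (deg e + deg y) + b * deg z + a' * deg bq + b' * deg w + deg z * deg bq + (deg e + deg y) * deg bq + deg x * deg e + deg e) * m mm nu t * m be mm de * mu ga ep rho * Sinv ep de * m t w bq * m bq x e * mu c1 z nu * (\<Sum>c2\<in>UNIV. mu rho e c2 * mu c2 y c1))" by (simp only: coassoc)
  also have "\<dots> = (\<Sum>mm\<in>UNIV. \<Sum>nu\<in>UNIV. \<Sum>de\<in>UNIV. \<Sum>ep\<in>UNIV. \<Sum>bq\<in>UNIV. \<Sum>t\<in>UNIV. \<Sum>e\<in>UNIV. \<Sum>c1\<in>UNIV. \<Sum>c2\<in>UNIV. sgn (deg mm * (deg e + deg y + deg z + deg de) + a * (deg e + deg y) + b * deg z + a' * deg bq + b' * deg w + deg z * deg bq + (deg e + deg y) * deg bq + deg x * deg e + deg e) * m mm nu t * m be mm de * Sinv ep de * m t w bq * m bq x e * mu c1 z nu * mu c2 y c1 * (\<Sum>rho\<in>UNIV. mu ga ep rho * mu rho e c2))"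
    apply (simp only: sum_distrib_left sum_distrib_right)?
    apply (simp only: sum.cartesian_product)
    apply (rule sum.reindex_bij_witness[of _ "\<lambda>(mm,nu,de,ep,bq,t,e,c1,c2,rho). (mm,nu,de,ep,rho,bq,t,e,c1,c2)" "\<lambda>(mm,nu,de,ep,rho,bq,t,e,c1,c2). (mm,nu,de,ep,bq,t,e,c1,c2,rho)"])
    apply auto[4]
    apply (simp only: split_paired_all prod.case)
    apply (rule sgn_start)
    apply (simp only: sgn_norm)
    apply ((rule sgn_eqI, simp add: mult_ac, (simp only: mult_eq_0_iff de_Morgan_disj)?, (elim conjE)?,
       ((drule m_hom | drule mu_hom | drule eps_hom | drule u_hom | drule S_hom | drule Sinv_hom)+)?, insert pa pb, (simp only: even_add even_mult_iff ev01)?, argo?)?)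
    done
  also have "\<dots> = (\<Sum>mm\<in>UNIV. \<Sum>nu\<in>UNIV. \<Sum>de\<in>UNIV. \<Sum>ep\<in>UNIV. \<Sum>bq\<in>UNIV. \<Sum>t\<in>UNIV. \<Sum>e\<in>UNIV. \<Sum>c1\<in>UNIV. \<Sum>c2\<in>UNIV. sgn (deg mm * (deg e + deg y + deg z + deg de) + a * (deg e + deg y) + b * deg z + a' * deg bq + b' * deg w + deg z * deg bq + (deg e + deg y) * deg bq + deg x * deg e + deg e) * m mm nu t * m be mm de * Sinv ep de * m t w bq * m bq x e * mu c1 z nu * mu c2 y c1 * (\<Sum>j\<in>UNIV. mu ga j c2 * mu j ep e))" by (simp only: coassoc[symmetric])
  also have "\<dots> = (\<Sum>mm\<in>UNIV. \<Sum>nu\<in>UNIV. \<Sum>de\<in>UNIV. \<Sum>ep\<in>UNIV. \<Sum>bq\<in>UNIV. \<Sum>e\<in>UNIV. \<Sum>c1\<in>UNIV. \<Sum>c2\<in>UNIV. \<Sum>j\<in>UNIV. sgn (deg mm * (deg e + deg y + deg z + deg de) + a * (deg e + deg y) + b * deg z + a' * deg bq + b' * deg w + deg z * deg bq + (deg e + deg y) * deg bq + deg x * deg e + deg e) * m be mm de * Sinv ep de * m bq x e * mu c1 z nu * mu c2 y c1 * mu ga j c2 * mu j ep e * (\<Sum>t\<in>UNIV. m t w bq * m mm nu t))"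
    apply (simp only: sum_distrib_left sum_distrib_right)?
    apply (simp only: sum.cartesian_product)
    apply (rule sum.reindex_bij_witness[of _ "\<lambda>(mm,nu,de,ep,bq,e,c1,c2,j,t). (mm,nu,de,ep,bq,t,e,c1,c2,j)" "\<lambda>(mm,nu,de,ep,bq,t,e,c1,c2,j). (mm,nu,de,ep,bq,e,c1,c2,j,t)"])
    apply auto[4]
    apply (simp only: split_paired_all prod.case)
    apply (rule sgn_start)
    apply (simp only: sgn_norm)
    apply ((rule sgn_eqI, simp add: mult_ac, (simp only: mult_eq_0_iff de_Morgan_disj)?, (elim conjE)?,
       ((drule m_hom | drule mu_hom | drule eps_hom | drule u_hom | drule S_hom | drule Sinv_hom)+)?, insert pa pb, (simp only: even_add even_mult_iff ev01)?, argo?)?)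
    done
  also have "\<dots> = (\<Sum>mm\<in>UNIV. \<Sum>nu\<in>UNIV. \<Sum>de\<in>UNIV. \<Sum>ep\<in>UNIV. \<Sum>bq\<in>UNIV. \<Sum>e\<in>UNIV. \<Sum>c1\<in>UNIV. \<Sum>c2\<in>UNIV. \<Sum>j\<in>UNIV. sgn (deg mm * (deg e + deg y + deg z + deg de) + a * (deg e + deg y) + b * deg z + a' * deg bq + b' * deg w + deg z * deg bq + (deg e + deg y) * deg bq + deg x * deg e + deg e) * m be mm de * Sinv ep de * m bq x e * mu c1 z nu * mu c2 y c1 * mu ga j c2 * mu j ep e * (\<Sum>d1\<in>UNIV. m d1 nu w * m mm d1 bq))" by (simp only: m_assoc[symmetric])
  also have "\<dots> = (\<Sum>mm\<in>UNIV. \<Sum>nu\<in>UNIV. \<Sum>de\<in>UNIV. \<Sum>ep\<in>UNIV. \<Sum>e\<in>UNIV. \<Sum>c1\<in>UNIV. \<Sum>c2\<in>UNIV. \<Sum>j\<in>UNIV. \<Sum>d1\<in>UNIV. sgn (deg mm * (deg e + deg y + deg z + deg de) + a * (deg e + deg y) + b * deg z + a' * (deg x + deg e) + b' * deg w + deg z * (deg x + deg e) + (deg e + deg y) * (deg x + deg e) + deg x * deg e + deg e) * m be mm de * Sinv ep de * mu c1 z nu * mu c2 y c1 * mu ga j c2 * mu j ep e * m d1 nu w * (\<Sum>bq\<in>UNIV. m bq x e * m mm d1 bq))"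
    apply (simp only: sum_distrib_left sum_distrib_right)?
    apply (simp only: sum.cartesian_product)
    apply (rule sum.reindex_bij_witness[of _ "\<lambda>(mm,nu,de,ep,e,c1,c2,j,d1,bq). (mm,nu,de,ep,bq,e,c1,c2,j,d1)" "\<lambda>(mm,nu,de,ep,bq,e,c1,c2,j,d1). (mm,nu,de,ep,e,c1,c2,j,d1,bq)"])
    apply auto[4]
    apply (simp only: split_paired_all prod.case)
    apply (rule sgn_start)
    apply (simp only: sgn_norm)
    apply ((rule sgn_eqI, simp add: mult_ac, (simp only: mult_eq_0_iff de_Morgan_disj)?, (elim conjE)?,
       ((drule m_hom | drule mu_hom | drule eps_hom | drule u_hom | drule S_hom | drule Sinv_hom)+)?, insert pa pb, (simp only: even_add even_mult_iff ev01)?, argo?)?)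
    done
  also have "\<dots> = (\<Sum>mm\<in>UNIV. \<Sum>nu\<in>UNIV. \<Sum>de\<in>UNIV. \<Sum>ep\<in>UNIV. \<Sum>e\<in>UNIV. \<Sum>c1\<in>UNIV. \<Sum>c2\<in>UNIV. \<Sum>j\<in>UNIV. \<Sum>d1\<in>UNIV. sgn (deg mm * (deg e + deg y + deg z + deg de) + a * (deg e + deg y) + b * deg z + a' * (deg x + deg e) + b' * deg w + deg z * (deg x + deg e) + (deg e + deg y) * (deg x + deg e) + deg x * deg e + deg e) * m be mm de * Sinv ep de * mu c1 z nu * mu c2 y c1 * mu ga j c2 * mu j ep e * m d1 nu w * (\<Sum>d2\<in>UNIV. m d2 d1 x * m mm d2 e))" by (simp only: m_assoc[symmetric])
  also have "\<dots> = (\<Sum>nu\<in>UNIV. \<Sum>de\<in>UNIV. \<Sum>ep\<in>UNIV. \<Sum>e\<in>UNIV. \<Sum>c1\<in>UNIV. \<Sum>c2\<in>UNIV. \<Sum>j\<in>UNIV. \<Sum>d1\<in>UNIV. \<Sum>d2\<in>UNIV. sgn ((deg d2 + deg e) * (deg e + deg y + deg z + deg de) + a * (deg e + deg y) + b * deg z + a' * (deg x + deg e) + b' * deg w + deg z * (deg x + deg e) + (deg e + deg y) * (deg x + deg e) + deg x * deg e + deg e) * Sinv ep de * mu c1 z nu * mu c2 y c1 * mu ga j c2 * mu j ep e * m d1 nu w * m d2 d1 x * (\<Sum>mm\<in>UNIV. m mm d2 e * m be mm de))"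
    apply (simp only: sum_distrib_left sum_distrib_right)?
    apply (simp only: sum.cartesian_product)
    apply (rule sum.reindex_bij_witness[of _ "\<lambda>(nu,de,ep,e,c1,c2,j,d1,d2,mm). (mm,nu,de,ep,e,c1,c2,j,d1,d2)" "\<lambda>(mm,nu,de,ep,e,c1,c2,j,d1,d2). (nu,de,ep,e,c1,c2,j,d1,d2,mm)"])
    apply auto[4]
    apply (simp only: split_paired_all prod.case)
    apply (rule sgn_start)
    apply (simp only: sgn_norm)
    apply ((rule sgn_eqI, simp add: mult_ac, (simp only: mult_eq_0_iff de_Morgan_disj)?, (elim conjE)?,
       ((drule m_hom | drule mu_hom | drule eps_hom | drule u_hom | drule S_hom | drule Sinv_hom)+)?, insert pa pb, (simp only: even_add even_mult_iff ev01)?, argo?)?)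
    done
  also have "\<dots> = (\<Sum>nu\<in>UNIV. \<Sum>de\<in>UNIV. \<Sum>ep\<in>UNIV. \<Sum>e\<in>UNIV. \<Sum>c1\<in>UNIV. \<Sum>c2\<in>UNIV. \<Sum>j\<in>UNIV. \<Sum>d1\<in>UNIV. \<Sum>d2\<in>UNIV. sgn ((deg d2 + deg e) * (deg e + deg y + deg z + deg de) + a * (deg e + deg y) + b * deg z + a' * (deg x + deg e) + b' * deg w + deg z * (deg x + deg e) + (deg e + deg y) * (deg x + deg e) + deg x * deg e + deg e) * Sinv ep de * mu c1 z nu * mu c2 y c1 * mu ga j c2 * mu j ep e * m d1 nu w * m d2 d1 x * (\<Sum>q\<in>UNIV. m q e de * m be d2 q))" by (simp only: m_assoc)
  also have "\<dots> = (\<Sum>nu\<in>UNIV. \<Sum>c1\<in>UNIV. \<Sum>c2\<in>UNIV. \<Sum>j\<in>UNIV. \<Sum>d1\<in>UNIV. \<Sum>d2\<in>UNIV. \<Sum>q\<in>UNIV. sgn (deg d2 * deg j + deg d2 * deg y + deg d2 * deg z + a * deg y + b * deg z + a' * deg x + b' * deg w + deg z * deg x + deg y * deg x) * mu c1 z nu * mu c2 y c1 * mu ga j c2 * m d1 nu w * m d2 d1 x * m be d2 q * (\<Sum>ep\<in>UNIV. \<Sum>e\<in>UNIV. \<Sum>de\<in>UNIV. sgn (deg ep * deg e) * mu j ep e * Sinv ep de * m q e de))"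
    apply (simp only: sum_distrib_left sum_distrib_right)?
    apply (simp only: sum.cartesian_product)
    apply (rule sum.reindex_bij_witness[of _ "\<lambda>(nu,c1,c2,j,d1,d2,q,ep,e,de). (nu,de,ep,e,c1,c2,j,d1,d2,q)" "\<lambda>(nu,de,ep,e,c1,c2,j,d1,d2,q). (nu,c1,c2,j,d1,d2,q,ep,e,de)"])
    apply auto[4]
    apply (simp only: split_paired_all prod.case)
    apply (rule sgn_start)
    apply (simp only: sgn_norm)
    apply ((rule sgn_eqI, simp add: mult_ac, (simp only: mult_eq_0_iff de_Morgan_disj)?, (elim conjE)?,
       ((drule m_hom | drule mu_hom | drule eps_hom | drule u_hom | drule S_hom | drule Sinv_hom)+)?, insert pa pb, (simp only: even_add even_mult_iff ev01)?, argo?)?)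
    done
  also have "\<dots> = (\<Sum>nu\<in>UNIV. \<Sum>c1\<in>UNIV. \<Sum>c2\<in>UNIV. \<Sum>j\<in>UNIV. \<Sum>d1\<in>UNIV. \<Sum>d2\<in>UNIV. \<Sum>q\<in>UNIV. sgn (deg d2 * deg j + deg d2 * deg y + deg d2 * deg z + a * deg y + b * deg z + a' * deg x + b' * deg w + deg z * deg x + deg y * deg x) * mu c1 z nu * mu c2 y c1 * mu ga j c2 * m d1 nu w * m d2 d1 x * m be d2 q * (eps j * u q))" by (simp only: Sinv_lem)
  also have "\<dots> = (\<Sum>nu\<in>UNIV. \<Sum>c1\<in>UNIV. \<Sum>c2\<in>UNIV. \<Sum>d1\<in>UNIV. \<Sum>d2\<in>UNIV. sgn (deg d2 * deg y + deg d2 * deg z + a * deg y + b * deg z + a' * deg x + b' * deg w + deg z * deg x + deg y * deg x) * mu c1 z nu * mu c2 y c1 * m d1 nu w * m d2 d1 x * (\<Sum>j\<in>UNIV. eps j * mu ga j c2) * (\<Sum>q\<in>UNIV. u q * m be d2 q))"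
    apply (simp only: sum_distrib_left sum_distrib_right)?
    apply (simp only: sum.cartesian_product)
    apply (rule sum.reindex_bij_witness[of _ "\<lambda>(nu,c1,c2,d1,d2,q,j). (nu,c1,c2,j,d1,d2,q)" "\<lambda>(nu,c1,c2,j,d1,d2,q). (nu,c1,c2,d1,d2,q,j)"])
    apply auto[4]
    apply (simp only: split_paired_all prod.case)
    apply (rule sgn_start)
    apply (simp only: sgn_norm)
    apply ((rule sgn_eqI, simp add: mult_ac, (simp only: mult_eq_0_iff de_Morgan_disj)?, (elim conjE)?,
       ((drule m_hom | drule mu_hom | drule eps_hom | drule u_hom | drule S_hom | drule Sinv_hom)+)?, insert pa pb, (simp only: even_add even_mult_iff ev01)?, argo?)?)
    done
  also have "\<dots> = (\<Sum>nu\<in>UNIV. \<Sum>c1\<in>UNIV. \<Sum>c2\<in>UNIV. \<Sum>d1\<in>UNIV. \<Sum>d2\<in>UNIV. sgn (deg d2 * deg y + deg d2 * deg z + a * deg y + b * deg z + a' * deg x + b' * deg w + deg z * deg x + deg y * deg x) * mu c1 z nu * mu c2 y c1 * m d1 nu w * m d2 d1 x * kron ga c2 * kron be d2)" by (simp only: counit_l unit_r)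
  also have "\<dots> = (\<Sum>nu\<in>UNIV. \<Sum>c1\<in>UNIV. \<Sum>d1\<in>UNIV. sgn (deg be * deg y + deg be * deg z + a * deg y + b * deg z + a' * deg x + b' * deg w + deg z * deg x + deg y * deg x) * mu c1 z nu * mu ga y c1 * m d1 nu w * m be d1 x)" by (simp add: kron_simps)
  also have "\<dots> = Lfin be ga x y z w"
    unfolding Lfin_def
    apply (simp only: sum_distrib_left sum_distrib_right)?
    apply (simp only: sum.cartesian_product)
    apply (rule sum.reindex_bij_witness[of _ "\<lambda>(d1,c1,nu). (nu,c1,d1)" "\<lambda>(nu,c1,d1). (d1,c1,nu)"])
    apply auto[4]
    apply (simp only: split_paired_all prod.case)
    apply (rule sgn_start)
    apply (simp only: sgn_norm)
    apply ((rule sgn_eqI, simp add: mult_ac, (simp only: mult_eq_0_iff de_Morgan_disj)?, (elim conjE)?,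
       ((drule m_hom | drule mu_hom | drule eps_hom | drule u_hom | drule S_hom | drule Sinv_hom)+)?, insert pa pb, (simp only: even_add even_mult_iff ev01)?, argo?)?)
    done
  finally show ?thesis .
qed
end

context GH2 begin

abbreviation "EE p \<equiv> sc_mult TT (Lv (fst p)) (Rv (snd p))"

lemma L3: "sc_mult TT (Rv be) (Lv ga) = (\<lambda>zz. \<Sum>s\<in>UNIV. \<Sum>t\<in>UNIV. D_cross deg m mu Sinv be ga s t * sc_mult TT (Lv s) (Rv t) zz)"
proof (intro ext, clarify)
  fix x y z w
  show "sc_mult TT (Rv be) (Lv ga) ((x,y),(z,w)) = (\<Sum>s\<in>UNIV. \<Sum>t\<in>UNIV. D_cross deg m mu Sinv be ga s t * sc_mult TT (Lv s) (Rv t) ((x,y),(z,w)))"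
    by (simp only: RL_coord L3_coord)
qed

lemma KEY: "sc_mult TT (EE (al,be)) (EE (ga,de)) = (\<lambda>zz. \<Sum>p\<in>UNIV. D_const deg m mu Sinv (al,be) (ga,de) p * EE p zz)"
proof -
  have "sc_mult TT (EE (al,be)) (EE (ga,de)) = sc_mult TT (Lv al) (sc_mult TT (sc_mult TT (Rv be) (Lv ga)) (Rv de))"
    by (simp only: T_sc_assoc fst_conv snd_conv)
  also have "\<dots> = (\<lambda>zz. \<Sum>s\<in>UNIV. \<Sum>t\<in>UNIV. D_cross deg m mu Sinv be ga s t * sc_mult TT (Lv al) (sc_mult TT (sc_mult TT (Lv s) (Rv t)) (Rv de)) zz)"
    by (simp only: L3 sc_lin_l2 sc_lin_r2)
  also have "\<dots> = (\<lambda>zz. \<Sum>s\<in>UNIV. \<Sum>t\<in>UNIV. D_cross deg m mu Sinv be ga s t * sc_mult TT (sc_mult TT (Lv al) (Lv s)) (sc_mult TT (Rv t) (Rv de)) zz)"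
    by (simp only: T_sc_assoc)
  also have "\<dots> = (\<lambda>zz. \<Sum>s\<in>UNIV. \<Sum>t\<in>UNIV. D_cross deg m mu Sinv be ga s t * (\<Sum>k\<in>UNIV. m k al s * (\<Sum>l\<in>UNIV. sgn (deg t * deg de) * mu l t de * sc_mult TT (Lv k) (Rv l) zz)))"
    by (simp only: L1 L2 sc_lin_l1 sc_lin_r1)
  also have "\<dots> = (\<lambda>zz. \<Sum>p\<in>UNIV. D_const deg m mu Sinv (al,be) (ga,de) p * EE p zz)"
  proof (rule ext)
    fix zz
    show "(\<Sum>s\<in>UNIV. \<Sum>t\<in>UNIV. D_cross deg m mu Sinv be ga s t * (\<Sum>k\<in>UNIV. m k al s * (\<Sum>l\<in>UNIV. sgn (deg t * deg de) * mu l t de * sc_mult TT (Lv k) (Rv l) zz))) =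
      (\<Sum>p\<in>UNIV. D_const deg m mu Sinv (al,be) (ga,de) p * EE p zz)"
    proof -
      have r: "(\<Sum>p\<in>UNIV. D_const deg m mu Sinv (al,be) (ga,de) p * EE p zz) =
        (\<Sum>k\<in>UNIV. \<Sum>l\<in>UNIV. (\<Sum>s\<in>UNIV. \<Sum>t\<in>UNIV. D_cross deg m mu Sinv be ga s t * m k al s * sgn (deg t * deg de) * mu l t de) * sc_mult TT (Lv k) (Rv l) zz)"
        by (simp add: sum_UNIV_pair D_const_def)
      have "(\<Sum>s\<in>UNIV. \<Sum>t\<in>UNIV. D_cross deg m mu Sinv be ga s t * (\<Sum>k\<in>UNIV. m k al s * (\<Sum>l\<in>UNIV. sgn (deg t * deg de) * mu l t de * sc_mult TT (Lv k) (Rv l) zz))) =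
        (\<Sum>k\<in>UNIV. \<Sum>l\<in>UNIV. (\<Sum>s\<in>UNIV. \<Sum>t\<in>UNIV. D_cross deg m mu Sinv be ga s t * m k al s * sgn (deg t * deg de) * mu l t de) * sc_mult TT (Lv k) (Rv l) zz)"
    apply (simp only: sum_distrib_left sum_distrib_right)
    apply (simp only: sum.cartesian_product)
    apply (rule sum.reindex_bij_witness[of _ "\<lambda>(k,l,s,t). (s,t,k,l)" "\<lambda>(s,t,k,l). (k,l,s,t)"])
    apply auto[4]
    apply (simp only: split_paired_all prod.case)
    apply (simp add: mult_ac)
    done
      then show ?thesis using r by simp
    qed
  qed
  finally show ?thesis .
qed

lemma unitL: "(\<lambda>z. \<Sum>al\<in>UNIV. u al * Lv al z) = T_unit u eps"
proof (intro ext, clarify)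
  fix s t k l
  have "(\<Sum>al\<in>UNIV. u al * Lv al ((s,t),(k,l))) = sgn (a * deg t + b * deg k) * eps s * eps l * (\<Sum>al\<in>UNIV. u al * mu al t k)"
    unfolding Lv_def eta_L_def by (simp add: kron_simps sum_distrib_left mult_ac)
  also have "\<dots> = sgn (a * deg t + b * deg k) * (eps s * u t * (u k * eps l))" by (simp only: u_mu) (simp add: mult_ac)
  also have "\<dots> = T_unit u eps ((s,t),(k,l))"
  proof (cases "u t = 0 \<or> u k = 0")
    case True then show ?thesis by (auto simp: T_unit_def)
  next
    case False
    then have "even (deg t)" "even (deg k)" by (auto dest!: u_hom)
    then have "sgn (a * deg t + b * deg k) = 1" by (simp add: sgn_if)
    then show ?thesis by (simp add: T_unit_def)
  qed
  finally show "(\<Sum>al\<in>UNIV. u al * Lv al ((s,t),(k,l))) = T_unit u eps ((s,t),(k,l))" .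
qed

lemma unitR: "(\<lambda>z. \<Sum>al\<in>UNIV. eps al * Rv al z) = T_unit u eps"
proof (intro ext, clarify)
  fix s t k l
  have "(\<Sum>al\<in>UNIV. eps al * Rv al ((s,t),(k,l))) = sgn (a' * deg s + b' * deg l) * u t * u k * (\<Sum>al\<in>UNIV. m al l s * eps al)"
    unfolding Rv_def eta_R_def by (simp add: kron_simps sum_distrib_left mult_ac)
  also have "\<dots> = sgn (a' * deg s + b' * deg l) * (eps s * u t * (u k * eps l))" by (simp only: m_eps) (simp add: mult_ac)
  also have "\<dots> = T_unit u eps ((s,t),(k,l))"
  proof (cases "eps s = 0 \<or> eps l = 0")
    case True then show ?thesis by (auto simp: T_unit_def)
  next
    case False
    then have "even (deg s)" "even (deg l)" by (auto dest!: eps_hom)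
    then have "sgn (a' * deg s + b' * deg l) = 1" by (simp add: sgn_if)
    then show ?thesis by (simp add: T_unit_def)
  qed
  finally show "(\<Sum>al\<in>UNIV. eps al * Rv al ((s,t),(k,l))) = T_unit u eps ((s,t),(k,l))" .
qed

lemma e1_exp: "(\<lambda>(s,t). eps s * u t) = (\<lambda>z. \<Sum>be\<in>UNIV. u be * Xv be z)"
  by (intro ext) (auto simp: Xv_def kron_simps mult_ac)
lemma e2_exp: "(\<lambda>(k,l). u k * eps l) = (\<lambda>z. \<Sum>be\<in>UNIV. u be * Yv be z)"
  by (intro ext) (auto simp: Yv_def kron_simps mult_ac)

lemma e1_sq: "sc_mult HA (\<lambda>(s,t). eps s * u t) (\<lambda>(s,t). eps s * u t) = (\<lambda>(s,t). eps s * u t)"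
proof -
  have "sc_mult HA (\<lambda>(s,t). eps s * u t) (\<lambda>(s,t). eps s * u t) = (\<lambda>z. \<Sum>be\<in>UNIV. u be * (\<Sum>be'\<in>UNIV. u be' * sc_mult HA (Xv be) (Xv be') z))"
    by (simp only: e1_exp sc_lin_l1 sc_lin_r1)
  also have "\<dots> = (\<lambda>(s,t). eps s * u t)"
  proof (intro ext, clarify)
    fix s t
    have "(\<Sum>be\<in>UNIV. u be * (\<Sum>be'\<in>UNIV. u be' * sc_mult HA (Xv be) (Xv be') (s,t))) = (\<Sum>be\<in>UNIV. u be * eps s * (\<Sum>be'\<in>UNIV. u be' * m t be be'))"
      by (simp add: XX sum_distrib_left mult_ac)
    also have "\<dots> = eps s * u t" by (simp only: unit_r) (simp add: kron_simps mult_ac)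
    finally show "(\<Sum>be\<in>UNIV. u be * (\<Sum>be'\<in>UNIV. u be' * sc_mult HA (Xv be) (Xv be') (s,t))) = eps s * u t" .
  qed
  finally show ?thesis .
qed

lemma e2_sq: "sc_mult HAs (\<lambda>(k,l). u k * eps l) (\<lambda>(k,l). u k * eps l) = (\<lambda>(k,l). u k * eps l)"
proof -
  have "sc_mult HAs (\<lambda>(k,l). u k * eps l) (\<lambda>(k,l). u k * eps l) = (\<lambda>z. \<Sum>be\<in>UNIV. u be * (\<Sum>be'\<in>UNIV. u be' * sc_mult HAs (Yv be) (Yv be') z))"
    by (simp only: e2_exp sc_lin_l1 sc_lin_r1)
  also have "\<dots> = (\<lambda>(k,l). u k * eps l)"
  proof (intro ext, clarify)
    fix s t
    have "(\<Sum>be\<in>UNIV. u be * (\<Sum>be'\<in>UNIV. u be' * sc_mult HAs (Yv be) (Yv be') (s,t))) = (\<Sum>be\<in>UNIV. u be * eps t * (\<Sum>be'\<in>UNIV. u be' * m s be be'))"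
      by (simp add: YY sum_distrib_left mult_ac)
    also have "\<dots> = u s * eps t" by (simp only: unit_r) (simp add: kron_simps mult_ac)
    finally show "(\<Sum>be\<in>UNIV. u be * (\<Sum>be'\<in>UNIV. u be' * sc_mult HAs (Yv be) (Yv be') (s,t))) = u s * eps t" .
  qed
  finally show ?thesis .
qed

lemma hom_e1: "hom 0 (\<lambda>(s,t). eps s * u t)" unfolding hom_def dp_def by (auto dest!: eps_hom u_hom)
lemma hom_e2: "hom 0 (\<lambda>(k,l). u k * eps l)" unfolding hom_def dp_def by (auto dest!: eps_hom u_hom)

lemma T_unit_ptens: "T_unit u eps = ptens (\<lambda>(s,t). eps s * u t) (\<lambda>(k,l). u k * eps l)"
  by (intro ext) (auto simp: T_unit_def ptens_def)

lemma TT_unit: "sc_mult TT (T_unit u eps) (T_unit u eps) = T_unit u eps"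
  unfolding T_unit_ptens ptens_mult[OF hom_e2 hom_e1] e1_sq e2_sq by (simp add: sgn_def)

lemma eta_eq: "eta deg m u mu eps a a' b b' x = (\<lambda>z. \<Sum>p\<in>UNIV. x p * EE p z)"
  by (simp add: eta_def Lv_def Rv_def)

lemma KEY': "sc_mult TT (EE i) (EE j) = (\<lambda>zz. \<Sum>p\<in>UNIV. D_const deg m mu Sinv i j p * EE p zz)"
  using KEY[of "fst i" "snd i" "fst j" "snd j"] by simp

lemma main_hom: "alg_hom (D_const deg m mu Sinv) (D_unit u eps) (T_const deg m mu) (T_unit u eps) (eta deg m u mu eps a a' b b')"
  unfolding alg_hom_def
proof (intro conjI allI)
  fix x y
  show "eta deg m u mu eps a a' b b' (sc_mult (D_const deg m mu Sinv) x y) =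
        sc_mult TT (eta deg m u mu eps a a' b b' x) (eta deg m u mu eps a a' b b' y)"
  proof (rule ext)
    fix z
    have "sc_mult TT (eta deg m u mu eps a a' b b' x) (eta deg m u mu eps a a' b b' y) z =
      (\<Sum>i\<in>UNIV. x i * (\<Sum>j\<in>UNIV. y j * (\<Sum>p\<in>UNIV. D_const deg m mu Sinv i j p * EE p z)))"
      by (simp only: eta_eq sc_lin_l1 sc_lin_r1 KEY')
    also have "\<dots> = (\<Sum>p\<in>UNIV. (\<Sum>i\<in>UNIV. \<Sum>j\<in>UNIV. x i * y j * D_const deg m mu Sinv i j p) * EE p z)"
    apply (simp only: sum_distrib_left sum_distrib_right)
    apply (simp only: sum.cartesian_product)
    apply (rule sum.reindex_bij_witness[of _ "\<lambda>(p,i,j). (i,j,p)" "\<lambda>(i,j,p). (p,i,j)"])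
    apply auto[4]
    apply (simp only: split_paired_all prod.case)
    apply (simp add: mult_ac)
    done
    also have "\<dots> = eta deg m u mu eps a a' b b' (sc_mult (D_const deg m mu Sinv) x y) z"
      by (simp only: eta_eq sc_mult_def)
    finally show "eta deg m u mu eps a a' b b' (sc_mult (D_const deg m mu Sinv) x y) z =
        sc_mult TT (eta deg m u mu eps a a' b b' x) (eta deg m u mu eps a a' b b' y) z" by simp
  qed
next
  show "eta deg m u mu eps a a' b b' (D_unit u eps) = T_unit u eps"
  proof -
    have "eta deg m u mu eps a a' b b' (D_unit u eps) = (\<lambda>z. \<Sum>al\<in>UNIV. u al * (\<Sum>be\<in>UNIV. eps be * sc_mult TT (Lv al) (Rv be) z))"
      by (simp add: eta_eq sum_UNIV_pair D_unit_def sum_distrib_left mult.assoc)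
    also have "\<dots> = sc_mult TT (\<lambda>z. \<Sum>al\<in>UNIV. u al * Lv al z) (\<lambda>z. \<Sum>al\<in>UNIV. eps al * Rv al z)"
      by (simp only: sc_lin_l1 sc_lin_r1)
    also have "\<dots> = T_unit u eps" by (simp only: unitL unitR TT_unit)
    finally show ?thesis .
  qed
qed

end

theorem mainTheorem3:
  fixes deg :: "'i::finite \<Rightarrow> nat"
    and m mu :: "'i \<Rightarrow> 'i \<Rightarrow> 'i \<Rightarrow> complex"
    and u eps :: "'i \<Rightarrow> complex"
    and S Sinv :: "'i \<Rightarrow> 'i \<Rightarrow> complex"
    and a a' b b' :: nat
  assumes "graded_hopf deg m u mu eps S"
    and "inverse_coeffs S Sinv"
    and "(-1::int) ^ (a + a') = -1"
    and "(-1::int) ^ (b + b') = 1"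
  shows "alg_hom (D_const deg m mu Sinv) (D_unit u eps)
                 (T_const deg m mu) (T_unit u eps)
                 (eta deg m u mu eps a a' b b')"
proof -
  have pa: "odd (a + a')" using assms(3) by (auto simp: minus_one_power_iff split: if_splits)
  have pb: "even (b + b')" using assms(4) by (auto simp: minus_one_power_iff split: if_splits)
  interpret GH2 deg m mu u eps S Sinv a b a' b'
    by unfold_locales (rule assms(1) assms(2) pa pb)+
  show ?thesis by (rule main_hom)
qed

end
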